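(* Let $(X,d)$ and $(\Lambda,d_\Lambda)$ be compact metric spaces, let $\tau:\Lambda\times X\to X$ be continuous, and let $q:X\to\mathcal{P}(\Lambda)$, $x\mapsto q_x$, be continuous. Assume: (W1) for every $\lambda\in\Lambda$ the map $\tau_\lambda$ is $1$-Lipschitz on $X$; (CP1) there are an integer $M\ge 1$ and $0<s<1$ such that for every $\lambda^M\in\Lambda^M$ the map $\tau_{\lambda^M}$ is $s$-Lipschitz on $X$; (H2) there is $r\ge 0$ with $d(\tau(\lambda_1,x),\tau(\lambda_2,x))\le r\,d_\Lambda(\lambda_1,\lambda_2)$ for all $\lambda_1,\lambda_2\in\Lambda$, $x\in X$; (H3) there is $t\ge 0$ with $d_{MK}(q_x,q_y)\le t\,d(x,y)$ for all $x,y\in X$; (H4) $q_x(A)>0$ for every nonempty open set $A\subseteq\Lambda$ and every $x\in X$. Suppose $s+r\,M\,t<1$. Then: (1) there is a unique nonempty compact set $A_{\mathcal R}\subseteq X$ with $F_{\mathcal R}(A_{\mathcal R})=A_{\mathcal R}$, and for every nonempty compact $B\subseteq X$, $F_{\mathcal R}^k(B)\to A_{\mathcal R}$ in the Hausdorff distance; (2) there is a unique $\mu_{\mathcal R}\in\mathcal{P}(X)$ with $T_q(\mu_{\mathcal R})=\mu_{\mathcal R}$, and for every $\nu\in\mathcal{P}(X)$, $T_q^k(\nu)\to\mu_{\mathcal R}$ in the Monge–Kantorovich distance; (3) $\operatorname{supp}(\mu_{\mathcal R})=A_{\mathcal R}$.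
   Context: $\mathcal{P}(Y)$ denotes the set of Borel probability measures on a compact metric space $Y$, with the Monge–Kantorovich distance $d_{MK}(\mu,\nu)=\sup_{f\in \mathrm{Lip}_1(Y)}\{\int f\,d\mu-\int f\,d\nu\}$, where $\mathrm{Lip}_1(Y)$ is the set of real $1$-Lipschitz functions on $Y$. Write $\tau_\lambda(x)=\tau(\lambda,x)$, and for $\lambda^k=(\lambda_0,\dots,\lambda_{k-1})\in\Lambda^k$, $\tau_{\lambda^k}=\tau_{\lambda_{k-1}}\circ\cdots\circ\tau_{\lambda_0}$. The Hutchinson–Barnsley (fractal) operator on the nonempty compact subsets of $X$ is $F_{\mathcal R}(B)=\bigcup_{\lambda\in\Lambda}\tau_\lambda(B)$. The transfer operator is $B_q(f)(x)=\int_\Lambda f(\tau(\lambda,x))\,dq_x(\lambda)$ for $f\in C(X)$, and the Markov operator $T_q:\mathcal{P}(X)\to\mathcal{P}(X)$ is defined by $\int f\,dT_q(\mu)=\int B_q(f)\,d\mu$ for all $f\in C(X)$. $T_q^k$, $F_{\mathcal R}^k$ are $k$-th iterates. *)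

theory Defs
  imports "HOL-Analysis.Analysis" "HOL-Probability.Probability"
begin

definition Prob :: "'a::metric_space measure set" where
  "Prob = {\<mu>. prob_space \<mu> \<and> sets \<mu> = sets borel}"

definition dMK :: "'a::metric_space measure \<Rightarrow> 'a measure \<Rightarrow> real" where
  "dMK \<mu> \<nu> = (SUP f \<in> {f :: 'a \<Rightarrow> real. 1-lipschitz_on UNIV f}.
                   integral\<^sup>L \<mu> f - integral\<^sup>L \<nu> f)"

text \<open>Hausdorff distance between nonempty bounded sets.\<close>
definition hausdorff_dist :: "'a::metric_space set \<Rightarrow> 'a set \<Rightarrow> real" where
  "hausdorff_dist A B = max (SUP a \<in> A. infdist a B) (SUP b \<in> B. infdist b A)"

text \<open>Composition along a word: tau_seq tau [l0,...,l(k-1)] = tau l(k-1) o ... o tau l0.\<close>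
primrec tau_seq :: "('l \<Rightarrow> 'x \<Rightarrow> 'x) \<Rightarrow> 'l list \<Rightarrow> 'x \<Rightarrow> 'x" where
  "tau_seq \<tau> [] = id"
| "tau_seq \<tau> (l # ls) = tau_seq \<tau> ls \<circ> \<tau> l"

definition fractal_op :: "('l \<Rightarrow> 'x \<Rightarrow> 'x) \<Rightarrow> 'x set \<Rightarrow> 'x set" where
  "fractal_op \<tau> B = (\<Union>l. \<tau> l ` B)"

definition transfer_op :: "('x \<Rightarrow> 'l measure) \<Rightarrow> ('l \<Rightarrow> 'x \<Rightarrow> 'x) \<Rightarrow> ('x \<Rightarrow> real) \<Rightarrow> 'x \<Rightarrow> real" where
  "transfer_op q \<tau> f x = integral\<^sup>L (q x) (\<lambda>l. f (\<tau> l x))"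

definition markov_op :: "('x::metric_space \<Rightarrow> 'l measure) \<Rightarrow> ('l \<Rightarrow> 'x \<Rightarrow> 'x) \<Rightarrow> 'x measure \<Rightarrow> 'x measure" where
  "markov_op q \<tau> \<mu> = (THE \<nu>. \<nu> \<in> Prob \<and>
      (\<forall>f :: 'x \<Rightarrow> real. continuous_on UNIV f \<longrightarrow>
          integral\<^sup>L \<nu> f = integral\<^sup>L \<mu> (transfer_op q \<tau> f)))"

definition supp :: "'a::topological_space measure \<Rightarrow> 'a set" where
  "supp \<mu> = {x. \<forall>U. open U \<and> x \<in> U \<longrightarrow> emeasure \<mu> U > 0}"

end

theory Submission
  imports Defs
begin


definition lipf :: "('a::metric_space \<Rightarrow> real) \<Rightarrow> bool" where
  "lipf f \<longleftrightarrow> (\<exists>L. L-lipschitz_on UNIV f)"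

lemma lipfI: "L-lipschitz_on UNIV f \<Longrightarrow> lipf f"
  unfolding lipf_def by blast

lemma lipf_cont: "lipf f \<Longrightarrow> continuous_on UNIV f"
  unfolding lipf_def using lipschitz_on_continuous_on by blast

lemma lipf_const: "lipf (\<lambda>x. c)"
  using lipschitz_on_constant lipfI by blast

lemma lipf_add: "lipf f \<Longrightarrow> lipf g \<Longrightarrow> lipf (\<lambda>x. f x + g x)"
  unfolding lipf_def using lipschitz_on_add by blast

lemma lipf_diff: "lipf f \<Longrightarrow> lipf g \<Longrightarrow> lipf (\<lambda>x. f x - g x)"
  unfolding lipf_def using lipschitz_on_diff by blast

lemma lipf_cmult: "lipf f \<Longrightarrow> lipf (\<lambda>x. c * f x)"
  unfolding lipf_def using lipschitz_on_cmult_real by blast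

lemma lipf_sum: "finite I \<Longrightarrow> (\<And>i. i \<in> I \<Longrightarrow> lipf (f i)) \<Longrightarrow> lipf (\<lambda>x. \<Sum>i\<in>I. f i x)"
  by (induction I rule: finite_induct) (auto intro: lipf_add lipf_const)

lemma cont_bounded:
  fixes f :: "'a::metric_space \<Rightarrow> real"
  assumes "compact (UNIV::'a set)" "continuous_on UNIV f"
  shows "\<exists>B. \<forall>x. \<bar>f x\<bar> \<le> B"
proof -
  have "compact (f ` UNIV)" using assms compact_continuous_image by blast
  then have "bounded (f ` UNIV)" by (rule compact_imp_bounded)
  then show ?thesis unfolding bounded_iff by auto
qed

lemma lipschitz_mult_bounded:
  fixes f g :: "'a::metric_space \<Rightarrow> real"
  assumes "L1-lipschitz_on UNIV f" "L2-lipschitz_on UNIV g"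
    "\<And>x. \<bar>f x\<bar> \<le> B1" "\<And>x. \<bar>g x\<bar> \<le> B2"
  shows "(B1 * L2 + B2 * L1)-lipschitz_on UNIV (\<lambda>x. f x * g x)"
proof (rule lipschitz_onI)
  have L1: "L1 \<ge> 0" "L2 \<ge> 0" using assms lipschitz_on_nonneg by blast+
  have B: "B1 \<ge> 0" "B2 \<ge> 0" using assms(3)[of undefined] assms(4)[of undefined] by auto
  then show "0 \<le> B1 * L2 + B2 * L1" using L1 by simp
  fix x y :: 'a
  have e: "f x * g x - f y * g y = f x * (g x - g y) + g y * (f x - f y)" by algebra
  have d1: "\<bar>f x - f y\<bar> \<le> L1 * dist x y" using lipschitz_onD[OF assms(1)] by (simp add: dist_real_def)
  have d2: "\<bar>g x - g y\<bar> \<le> L2 * dist x y" using lipschitz_onD[OF assms(2)] by (simp add: dist_real_def)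
  have "\<bar>f x * (g x - g y)\<bar> \<le> B1 * (L2 * dist x y)"
    unfolding abs_mult by (rule mult_mono[OF assms(3) d2 B(1) abs_ge_zero])
  moreover have "\<bar>g y * (f x - f y)\<bar> \<le> B2 * (L1 * dist x y)"
    unfolding abs_mult by (rule mult_mono[OF assms(4) d1 B(2) abs_ge_zero])
  ultimately have "\<bar>f x * g x - f y * g y\<bar> \<le> B1 * (L2 * dist x y) + B2 * (L1 * dist x y)"
    unfolding e by linarith
  then show "dist (f x * g x) (f y * g y) \<le> (B1 * L2 + B2 * L1) * dist x y"
    by (simp add: dist_real_def algebra_simps)
qed

lemma lipf_mult:
  fixes f g :: "'a::metric_space \<Rightarrow> real"
  assumes "compact (UNIV::'a set)" "lipf f" "lipf g"
  shows "lipf (\<lambda>x. f x * g x)"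
proof -
  obtain L1 L2 where L: "L1-lipschitz_on UNIV f" "L2-lipschitz_on UNIV g"
    using assms unfolding lipf_def by blast
  obtain B1 B2 where "\<And>x. \<bar>f x\<bar> \<le> B1" "\<And>x. \<bar>g x\<bar> \<le> B2"
    using cont_bounded[OF assms(1) lipf_cont[OF assms(2)]] cont_bounded[OF assms(1) lipf_cont[OF assms(3)]]
    by blast
  then show ?thesis using lipschitz_mult_bounded[OF L] lipfI by blast
qed

lemma lipf_prod:
  assumes "compact (UNIV::'a::metric_space set)"
  shows "finite I \<Longrightarrow> (\<And>i. i \<in> I \<Longrightarrow> lipf (f i :: 'a \<Rightarrow> real)) \<Longrightarrow> lipf (\<lambda>x. \<Prod>i\<in>I. f i x)"
  by (induction I rule: finite_induct) (auto intro: lipf_mult[OF assms] lipf_const)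



lemma Prob_D: "\<mu> \<in> Prob \<Longrightarrow> prob_space \<mu>" "\<mu> \<in> Prob \<Longrightarrow> sets \<mu> = sets borel"
  unfolding Prob_def by auto

lemma Prob_space: "\<mu> \<in> Prob \<Longrightarrow> space \<mu> = UNIV"
  using sets_eq_imp_space_eq[OF Prob_D(2)] by simp

lemma Prob_meas: "\<mu> \<in> Prob \<Longrightarrow> f \<in> borel_measurable borel \<Longrightarrow> f \<in> borel_measurable \<mu>"
  using measurable_cong_sets[OF Prob_D(2) refl] by blast

lemma Prob_sets: "\<mu> \<in> Prob \<Longrightarrow> A \<in> sets borel \<Longrightarrow> A \<in> sets \<mu>"
  using Prob_D(2) by blast

lemma integrable_cont:
  fixes f :: "'a::metric_space \<Rightarrow> real"
  assumes "compact (UNIV::'a set)" "\<mu> \<in> Prob" "continuous_on UNIV f"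
  shows "integrable \<mu> f"
proof -
  obtain B where B: "\<And>x. \<bar>f x\<bar> \<le> B" using cont_bounded[OF assms(1,3)] by blast
  interpret prob_space \<mu> by (rule Prob_D(1)[OF assms(2)])
  show ?thesis
    by (rule integrable_const_bound[where B=B])
       (use B Prob_meas[OF assms(2) borel_measurable_continuous_onI[OF assms(3)]] in auto)
qed

lemma integrable_lipf: "compact (UNIV::'a::metric_space set) \<Longrightarrow> \<mu> \<in> Prob \<Longrightarrow> lipf (f::'a\<Rightarrow>real) \<Longrightarrow> integrable \<mu> f"
  using integrable_cont lipf_cont by blast

lemma int_le_const:
  assumes "\<mu> \<in> Prob" "integrable \<mu> f" "\<And>x. f x \<le> (c::real)"
  shows "integral\<^sup>L \<mu> f \<le> c"
proof -
  interpret prob_space \<mu> by (rule Prob_D(1)[OF assms(1)])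
  have "integral\<^sup>L \<mu> f \<le> integral\<^sup>L \<mu> (\<lambda>x. c)"
    by (rule integral_mono) (use assms(2,3) in auto)
  then show ?thesis by (simp add: prob_space)
qed

lemma int_ge_const:
  assumes "\<mu> \<in> Prob" "integrable \<mu> f" "\<And>x. f x \<ge> (c::real)"
  shows "integral\<^sup>L \<mu> f \<ge> c"
proof -
  interpret prob_space \<mu> by (rule Prob_D(1)[OF assms(1)])
  have "integral\<^sup>L \<mu> f \<ge> integral\<^sup>L \<mu> (\<lambda>x. c)"
    by (rule integral_mono) (use assms(2,3) in auto)
  then show ?thesis by (simp add: prob_space)
qed

lemma int_const_Prob: "\<mu> \<in> Prob \<Longrightarrow> integral\<^sup>L \<mu> (\<lambda>x. c) = (c::real)"
proof -
  assume "\<mu> \<in> Prob"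
  then interpret prob_space \<mu> by (rule Prob_D(1))
  show ?thesis by (simp add: prob_space)
qed

subsection \<open>Approximating indicators of closed sets\<close>

definition happ :: "'a::metric_space set \<Rightarrow> nat \<Rightarrow> 'a \<Rightarrow> real" where
  "happ C m x = max 0 (1 - real m * infdist x C)"

lemma happ_lip: "(real m)-lipschitz_on UNIV (happ C m)"
proof (rule lipschitz_onI)
  fix x y :: 'a
  have "\<bar>happ C m x - happ C m y\<bar> \<le> \<bar>(1 - real m * infdist x C) - (1 - real m * infdist y C)\<bar>"
    unfolding happ_def by linarith
  also have "\<dots> = real m * \<bar>infdist x C - infdist y C\<bar>"
    by (simp add: abs_mult right_diff_distrib[symmetric] abs_minus_commute)
  also have "\<dots> \<le> real m * dist x y"
    by (rule mult_left_mono) (auto simp: infdist_triangle_abs)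
  finally show "dist (happ C m x) (happ C m y) \<le> real m * dist x y"
    by (simp add: dist_real_def)
qed simp

lemma happ_lipf: "lipf (happ C m)"
  using happ_lip lipfI by blast

lemma happ_bounds: "0 \<le> happ C m x" "happ C m x \<le> 1"
  unfolding happ_def using infdist_nonneg[of x C] by auto

lemma happ_abs: "\<bar>happ C m x\<bar> \<le> 1"
  by (metis abs_of_nonneg happ_bounds)

lemma happ_ge_ind: "indicator C x \<le> happ C m x"
  unfolding happ_def by (auto simp: indicator_def)

lemma happ_tendsto:
  assumes "closed C" "C \<noteq> {}"
  shows "(\<lambda>m. happ C m x) \<longlonglongrightarrow> indicator C x"
proof (cases "x \<in> C")
  case True
  then show ?thesis unfolding happ_def by simp
next
  case False
  then have pos: "infdist x C > 0" using infdist_pos_not_in_closed assms by blast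
  obtain N where N: "real N * infdist x C > 1"
    using reals_Archimedean3[OF pos] by blast
  have "eventually (\<lambda>m. happ C m x = 0) sequentially"
  proof (rule eventually_sequentiallyI[of N])
    fix m assume "N \<le> m"
    then have "real N * infdist x C \<le> real m * infdist x C"
      using pos by (intro mult_right_mono) auto
    then show "happ C m x = 0" unfolding happ_def using N by auto
  qed
  then have "(\<lambda>m. happ C m x) \<longlonglongrightarrow> 0" by (rule tendsto_eventually)
  then show ?thesis using False by simp
qed

lemma happ_integral_tendsto:
  fixes C :: "'a::metric_space set"
  assumes "\<mu> \<in> Prob" "closed C" "C \<noteq> {}"
  shows "(\<lambda>m. integral\<^sup>L \<mu> (happ C m)) \<longlonglongrightarrow> measure \<mu> C"
proof -
  interpret prob_space \<mu> by (rule Prob_D(1)[OF assms(1)])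
  have C: "C \<in> sets \<mu>" using Prob_sets[OF assms(1) borel_closed[OF assms(2)]] .
  have "(\<lambda>m. integral\<^sup>L \<mu> (happ C m)) \<longlonglongrightarrow> integral\<^sup>L \<mu> (indicator C)"
  proof (rule integral_dominated_convergence[where w="\<lambda>x. 1"])
    show "indicat_real C \<in> borel_measurable \<mu>" using C by simp
    show "happ C i \<in> borel_measurable \<mu>" for i
      using Prob_meas[OF assms(1) borel_measurable_continuous_onI[OF lipf_cont[OF happ_lipf]]] .
    show "integrable \<mu> (\<lambda>x. 1::real)" by simp
    show "AE x in \<mu>. (\<lambda>i. happ C i x) \<longlonglongrightarrow> indicat_real C x"
      by (intro AE_I2 happ_tendsto[OF assms(2,3)])
    show "AE x in \<mu>. norm (happ C i x) \<le> 1" for i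
      by (intro AE_I2) (simp add: happ_abs)
  qed
  also have "integral\<^sup>L \<mu> (indicator C) = measure \<mu> C"
    using C by simp
  finally show ?thesis .
qed

subsection \<open>Measures determined by Lipschitz functions\<close>

lemma sets_borel_closed: "sets (borel :: 'a::topological_space measure) = sigma_sets UNIV (Collect closed)"
  by (subst borel_eq_closed) (simp add: sets_measure_of)

lemma Prob_eqI_lip:
  fixes \<mu> \<nu> :: "'a::metric_space measure"
  assumes cX: "compact (UNIV::'a set)" and P: "\<mu> \<in> Prob" "\<nu> \<in> Prob"
    and eq: "\<And>f. lipf f \<Longrightarrow> integral\<^sup>L \<mu> f = integral\<^sup>L \<nu> f"
  shows "\<mu> = \<nu>"
proof (rule measure_eqI_generator_eq[where E="Collect closed" and \<Omega>=UNIV and A="\<lambda>_. UNIV"])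
  show "Int_stable (Collect closed)" by (auto simp: Int_stable_def)
  show "Collect closed \<subseteq> Pow UNIV" by auto
  show "sets \<mu> = sigma_sets UNIV (Collect closed)" "sets \<nu> = sigma_sets UNIV (Collect closed)"
    using Prob_D P sets_borel_closed by metis+
  show "range (\<lambda>_. UNIV) \<subseteq> Collect closed" by auto
  show "\<Union> (range (\<lambda>_. UNIV)) = UNIV" by auto
  interpret m: prob_space \<mu> by (rule Prob_D(1)[OF P(1)])
  interpret n: prob_space \<nu> by (rule Prob_D(1)[OF P(2)])
  show "emeasure \<mu> UNIV \<noteq> \<infinity>" for i by simp
  fix C :: "'a set" assume "C \<in> Collect closed"
  then have cl: "closed C" by simp
  show "emeasure \<mu> C = emeasure \<nu> C"
  proof (cases "C = {}")
    case True then show ?thesis by simp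
  next
    case False
    have "(\<lambda>m. integral\<^sup>L \<mu> (happ C m)) \<longlonglongrightarrow> measure \<mu> C"
      using happ_integral_tendsto P cl False by blast
    moreover have "(\<lambda>m. integral\<^sup>L \<mu> (happ C m)) \<longlonglongrightarrow> measure \<nu> C"
      using happ_integral_tendsto[OF P(2) cl False] eq[OF happ_lipf] by simp
    ultimately have "measure \<mu> C = measure \<nu> C" using LIMSEQ_unique by blast
    then show ?thesis by (simp add: m.emeasure_eq_measure n.emeasure_eq_measure)
  qed
qed

lemma closed_full_measure_limit:
  fixes \<mu> :: "'a::metric_space measure"
  assumes P: "\<And>n. \<mu>s n \<in> Prob" "\<mu> \<in> Prob"
    and lim: "\<And>f. lipf f \<Longrightarrow> (\<lambda>n. integral\<^sup>L (\<mu>s n) f) \<longlonglongrightarrow> integral\<^sup>L \<mu> f"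
    and C: "closed C" and full: "\<And>n. measure (\<mu>s n) C = 1"
  shows "measure \<mu> C = 1"
proof -
  interpret prob_space \<mu> by (rule Prob_D(1)[OF P(2)])
  have ne: "C \<noteq> {}" using full[of 0] by auto
  have ge: "integral\<^sup>L \<mu> (happ C m) \<ge> 1" for m
  proof (rule LIMSEQ_le_const[OF lim[OF happ_lipf]])
    show "\<exists>N. \<forall>n\<ge>N. 1 \<le> integral\<^sup>L (\<mu>s n) (happ C m)"
    proof (intro exI allI impI)
      fix n
      interpret pn: prob_space "\<mu>s n" by (rule Prob_D(1)[OF P(1)])
      have Cs: "C \<in> sets (\<mu>s n)" using Prob_sets[OF P(1) borel_closed[OF C]] .
      have "integral\<^sup>L (\<mu>s n) (indicator C) \<le> integral\<^sup>L (\<mu>s n) (happ C m)"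
      proof (rule integral_mono)
        show "integrable (\<mu>s n) (indicat_real C)"
          by (rule pn.integrable_const_bound[where B=1]) (use Cs in auto)
        show "integrable (\<mu>s n) (happ C m)"
          by (rule pn.integrable_const_bound[of "happ C m" 1])
             (auto intro!: AE_I2 simp: happ_abs Prob_meas[OF P(1) borel_measurable_continuous_onI[OF lipf_cont[OF happ_lipf]]])
      qed (rule happ_ge_ind)
      then show "1 \<le> integral\<^sup>L (\<mu>s n) (happ C m)" using full[of n] Cs by simp
    qed
  qed
  have "measure \<mu> C \<ge> 1"
    by (rule LIMSEQ_le_const[OF happ_integral_tendsto[OF P(2) C ne]]) (use ge in auto)
  moreover have "measure \<mu> C \<le> 1" by simp
  ultimately show ?thesis by simp
qed

subsection \<open>Monge-Kantorovich distance\<close>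

lemma compact_diam:
  assumes "compact (UNIV::'a::metric_space set)"
  shows "\<exists>D\<ge>0. \<forall>x y::'a. dist x y \<le> D"
proof -
  have "bounded (UNIV::'a set)" using assms compact_imp_bounded by blast
  then obtain e where e: "\<And>y::'a. dist undefined y \<le> e" unfolding bounded_any_center[where a=undefined] by blast
  have "dist x y \<le> 2 * e" for x y :: 'a
    using dist_triangle[of x y undefined] e[of x] e[of y] by (simp add: dist_commute)
  then show ?thesis using e[of undefined] by (intro exI[of _ "2*e"]) auto
qed

lemma lip1_int_diff_bound:
  fixes \<mu> \<nu> :: "'a::metric_space measure"
  assumes cX: "compact (UNIV::'a set)" and P: "\<mu> \<in> Prob" "\<nu> \<in> Prob"
    and D: "\<And>x y::'a. dist x y \<le> D" and f: "1-lipschitz_on UNIV f"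
  shows "integral\<^sup>L \<mu> f - integral\<^sup>L \<nu> f \<le> 2 * D"
proof -
  have i: "integrable \<mu> f" "integrable \<nu> f" using integrable_lipf lipfI f cX P by blast+
  have h: "\<bar>f x - f undefined\<bar> \<le> D" for x
    using lipschitz_onD[OF f, of x undefined] D[of x undefined] by (simp add: dist_real_def)
  have h1: "f x \<le> f undefined + D" for x using h[of x] by (simp add: abs_le_iff)
  have h2: "f x \<ge> f undefined - D" for x using h[of x] by (simp add: abs_le_iff)
  have "integral\<^sup>L \<mu> f \<le> f undefined + D" "integral\<^sup>L \<nu> f \<ge> f undefined - D"
    using int_le_const[OF P(1) i(1) h1] int_ge_const[OF P(2) i(2) h2] by auto
  then show ?thesis by simp
qed

lemma dMK_ge:
  fixes \<mu> \<nu> :: "'a::metric_space measure"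
  assumes cX: "compact (UNIV::'a set)" and P: "\<mu> \<in> Prob" "\<nu> \<in> Prob"
    and f: "1-lipschitz_on UNIV f"
  shows "integral\<^sup>L \<mu> f - integral\<^sup>L \<nu> f \<le> dMK \<mu> \<nu>"
proof -
  obtain D where D: "\<And>x y::'a. dist x y \<le> D" using compact_diam cX by blast
  show ?thesis unfolding dMK_def
    by (rule cSUP_upper) (use f lip1_int_diff_bound[OF cX P D] in \<open>auto simp: bdd_above_def\<close>)
qed

lemma dMK_le:
  fixes \<mu> \<nu> :: "'a::metric_space measure"
  assumes "\<And>f. 1-lipschitz_on UNIV f \<Longrightarrow> integral\<^sup>L \<mu> f - integral\<^sup>L \<nu> f \<le> c"
  shows "dMK \<mu> \<nu> \<le> c"
  unfolding dMK_def
proof (rule cSUP_least)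
  have "1-lipschitz_on UNIV (\<lambda>x::'a. 0::real)"
    by (rule lipschitz_on_le[OF lipschitz_on_constant]) simp
  then show "{f::'a\<Rightarrow>real. 1-lipschitz_on UNIV f} \<noteq> {}" by blast
qed (use assms in auto)

lemma dMK_nonneg:
  fixes \<mu> \<nu> :: "'a::metric_space measure"
  assumes cX: "compact (UNIV::'a set)" and P: "\<mu> \<in> Prob" "\<nu> \<in> Prob"
  shows "0 \<le> dMK \<mu> \<nu>"
proof -
  have "1-lipschitz_on UNIV (\<lambda>x::'a. 0::real)"
    by (rule lipschitz_on_le[OF lipschitz_on_constant]) simp
  from dMK_ge[OF cX P this] show ?thesis by simp
qed

lemma dMK_bound:
  fixes \<mu> \<nu> :: "'a::metric_space measure"
  assumes cX: "compact (UNIV::'a set)" and P: "\<mu> \<in> Prob" "\<nu> \<in> Prob"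
    and D: "\<And>x y::'a. dist x y \<le> D"
  shows "dMK \<mu> \<nu> \<le> 2 * D"
  by (rule dMK_le) (rule lip1_int_diff_bound[OF cX P D])

lemma dMK_lip:
  fixes \<mu> \<nu> :: "'a::metric_space measure"
  assumes cX: "compact (UNIV::'a set)" and P: "\<mu> \<in> Prob" "\<nu> \<in> Prob"
    and f: "L-lipschitz_on UNIV f"
  shows "integral\<^sup>L \<mu> f - integral\<^sup>L \<nu> f \<le> L * dMK \<mu> \<nu>"
proof -
  have L: "L \<ge> 0" using f lipschitz_on_nonneg by blast
  show ?thesis
  proof (cases "L = 0")
    case True
    then have "f x = f undefined" for x using lipschitz_onD[OF f, of x undefined] by simp
    then have fe: "f = (\<lambda>x. f undefined)" by auto
    have "integral\<^sup>L \<mu> f = f undefined" by (subst fe) (rule int_const_Prob[OF P(1)])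
    moreover have "integral\<^sup>L \<nu> f = f undefined" by (subst fe) (rule int_const_Prob[OF P(2)])
    ultimately show ?thesis using True by simp
  next
    case False
    then have Lp: "L > 0" using L by simp
    have "1-lipschitz_on UNIV (\<lambda>x. f x / L)"
    proof (rule lipschitz_onI)
      fix x y
      have "dist (f x / L) (f y / L) = dist (f x) (f y) / L"
        using Lp by (simp add: dist_real_def diff_divide_distrib[symmetric])
      also have "\<dots> \<le> L * dist x y / L" using lipschitz_onD[OF f, of x y] Lp by (intro divide_right_mono) auto
      finally show "dist (f x / L) (f y / L) \<le> 1 * dist x y" using Lp by simp
    qed simp
    from dMK_ge[OF cX P this] have "integral\<^sup>L \<mu> f / L - integral\<^sup>L \<nu> f / L \<le> dMK \<mu> \<nu>"
      by (simp add: integral_divide_zero)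
    then show ?thesis using Lp by (simp add: field_simps diff_divide_distrib[symmetric])
  qed
qed

lemma lipf_lipschitz: "lipf f \<Longrightarrow> \<exists>L\<ge>0. L-lipschitz_on UNIV f"
  unfolding lipf_def using lipschitz_on_nonneg by blast

lemma dMK_zero_eq:
  fixes \<mu> \<nu> :: "'a::metric_space measure"
  assumes cX: "compact (UNIV::'a set)" and P: "\<mu> \<in> Prob" "\<nu> \<in> Prob"
    and z: "dMK \<mu> \<nu> \<le> 0"
  shows "\<mu> = \<nu>"
proof (rule Prob_eqI_lip[OF cX P])
  fix f :: "'a \<Rightarrow> real" assume "lipf f"
  then obtain L where L: "L \<ge> 0" "L-lipschitz_on UNIV f" using lipf_lipschitz by blast
  have "integral\<^sup>L \<mu> f - integral\<^sup>L \<nu> f \<le> L * dMK \<mu> \<nu>" using dMK_lip[OF cX P L(2)] .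
  also have "\<dots> \<le> 0" using L z by (simp add: mult_nonneg_nonpos)
  finally have 1: "integral\<^sup>L \<mu> f \<le> integral\<^sup>L \<nu> f" by simp
  have "L-lipschitz_on UNIV (\<lambda>x. - f x)" using L(2) by simp
  from dMK_lip[OF cX P this] have "integral\<^sup>L \<mu> (\<lambda>x. - f x) - integral\<^sup>L \<nu> (\<lambda>x. - f x) \<le> L * dMK \<mu> \<nu>" .
  also have "\<dots> \<le> 0" using L z by (simp add: mult_nonneg_nonpos)
  finally have 2: "integral\<^sup>L \<nu> f \<le> integral\<^sup>L \<mu> f" by simp
  from 1 2 show "integral\<^sup>L \<mu> f = integral\<^sup>L \<nu> f" by simp
qed


lemma cover_list:
  assumes "compact (UNIV::'a::metric_space set)" "e > 0"
  shows "\<exists>xs::'a list. \<forall>y. \<exists>c\<in>set xs. dist c y < e"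
proof -
  from assms(1)[unfolded compact_eq_totally_bounded] assms(2)
  obtain K :: "'a set" where K: "finite K" "UNIV \<subseteq> (\<Union>x\<in>K. ball x e)" by blast
  obtain xs where xs: "set xs = K" using finite_list[OF K(1)] by blast
  show ?thesis
  proof (intro exI allI)
    fix y :: 'a
    from K(2) have "y \<in> (\<Union>x\<in>K. ball x e)" by blast
    then show "\<exists>c\<in>set xs. dist c y < e" using xs by (auto simp: mem_ball)
  qed
qed

lemma dist_diff_le: "\<bar>dist c y - dist c z\<bar> \<le> dist y z"
  using dist_triangle[of c y z] dist_triangle[of c z y] by (simp add: dist_commute abs_le_iff)

fun Vt :: "(nat \<Rightarrow> nat) \<Rightarrow> nat \<Rightarrow> nat list set" where
  "Vt Nf 0 = {[]}"
| "Vt Nf (Suc k) = (\<lambda>(i, p). i # p) ` ({..<Nf k} \<times> Vt Nf k)"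

primrec lot :: "(nat list \<Rightarrow> real) \<Rightarrow> nat list \<Rightarrow> real" where
  "lot w [] = 0"
| "lot w (i # p) = lot w p + (\<Sum>j<i. w (j # p))"

definition selt :: "(nat list \<Rightarrow> real) \<Rightarrow> nat list \<Rightarrow> real \<Rightarrow> nat" where
  "selt w p u = (LEAST i. u < lot w p + (\<Sum>j<Suc i. w (j # p)))"

primrec nodet :: "(nat list \<Rightarrow> real) \<Rightarrow> nat \<Rightarrow> real \<Rightarrow> nat list" where
  "nodet w 0 u = []"
| "nodet w (Suc k) u = selt w (nodet w k u) u # nodet w k u"

locale lim_constr =
  fixes \<mu>s :: "nat \<Rightarrow> 'a::metric_space measure"
  assumes cX: "compact (UNIV::'a set)"
    and P: "\<And>n. \<mu>s n \<in> Prob"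
    and conv: "\<And>f. lipf f \<Longrightarrow> convergent (\<lambda>n. integral\<^sup>L (\<mu>s n) f)"
begin

definition Lim :: "('a \<Rightarrow> real) \<Rightarrow> real" where
  "Lim f = lim (\<lambda>n. integral\<^sup>L (\<mu>s n) f)"

lemma Lim_tendsto: "lipf f \<Longrightarrow> (\<lambda>n. integral\<^sup>L (\<mu>s n) f) \<longlonglongrightarrow> Lim f"
  unfolding Lim_def using conv convergent_LIMSEQ_iff by blast

lemma intg: "lipf f \<Longrightarrow> integrable (\<mu>s n) f"
  using integrable_lipf[OF cX P] by blast

lemma Lim_sum:
  assumes "finite I" "\<And>i. i \<in> I \<Longrightarrow> lipf (f i)"
  shows "Lim (\<lambda>x. \<Sum>i\<in>I. f i x) = (\<Sum>i\<in>I. Lim (f i))"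
proof -
  have "(\<lambda>n. integral\<^sup>L (\<mu>s n) (\<lambda>x. \<Sum>i\<in>I. f i x)) = (\<lambda>n. \<Sum>i\<in>I. integral\<^sup>L (\<mu>s n) (f i))"
    by (rule ext, rule Bochner_Integration.integral_sum) (rule intg[OF assms(2)])
  moreover have "(\<lambda>n. \<Sum>i\<in>I. integral\<^sup>L (\<mu>s n) (f i)) \<longlonglongrightarrow> (\<Sum>i\<in>I. Lim (f i))"
    by (rule tendsto_sum) (rule Lim_tendsto[OF assms(2)])
  ultimately have "(\<lambda>n. integral\<^sup>L (\<mu>s n) (\<lambda>x. \<Sum>i\<in>I. f i x)) \<longlonglongrightarrow> (\<Sum>i\<in>I. Lim (f i))" by simp
  moreover have "(\<lambda>n. integral\<^sup>L (\<mu>s n) (\<lambda>x. \<Sum>i\<in>I. f i x)) \<longlonglongrightarrow> Lim (\<lambda>x. \<Sum>i\<in>I. f i x)"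
    by (rule Lim_tendsto, rule lipf_sum[OF assms])
  ultimately show ?thesis using LIMSEQ_unique by blast
qed

lemma Lim_cmult:
  assumes "lipf f"
  shows "Lim (\<lambda>x. c * f x) = c * Lim f"
proof -
  have "(\<lambda>n. integral\<^sup>L (\<mu>s n) (\<lambda>x. c * f x)) \<longlonglongrightarrow> c * Lim f"
    using tendsto_mult_left[OF Lim_tendsto[OF assms], of c] by simp
  moreover have "(\<lambda>n. integral\<^sup>L (\<mu>s n) (\<lambda>x. c * f x)) \<longlonglongrightarrow> Lim (\<lambda>x. c * f x)"
    by (rule Lim_tendsto, rule lipf_cmult[OF assms])
  ultimately show ?thesis using LIMSEQ_unique by blast
qed

lemma Lim_const: "Lim (\<lambda>x. c) = c"
proof -
  have "(\<lambda>n. integral\<^sup>L (\<mu>s n) (\<lambda>x. c)) = (\<lambda>n. c)"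
    by (rule ext, rule int_const_Prob[OF P])
  then have "(\<lambda>n. integral\<^sup>L (\<mu>s n) (\<lambda>x. c)) \<longlonglongrightarrow> c" by simp
  moreover have "(\<lambda>n. integral\<^sup>L (\<mu>s n) (\<lambda>x. c)) \<longlonglongrightarrow> Lim (\<lambda>x. c)"
    by (rule Lim_tendsto, rule lipf_const)
  ultimately show ?thesis using LIMSEQ_unique by blast
qed

lemma Lim_bound:
  assumes "lipf f" "lipf g" "\<And>x. \<bar>f x - g x\<bar> \<le> e"
  shows "\<bar>Lim f - Lim g\<bar> \<le> e"
proof -
  have "\<bar>integral\<^sup>L (\<mu>s n) f - integral\<^sup>L (\<mu>s n) g\<bar> \<le> e" for n
  proof -
    have eq: "integral\<^sup>L (\<mu>s n) f - integral\<^sup>L (\<mu>s n) g = integral\<^sup>L (\<mu>s n) (\<lambda>x. f x - g x)"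
      by (rule Bochner_Integration.integral_diff[symmetric]) (rule intg, fact)+
    have i: "integrable (\<mu>s n) (\<lambda>x. f x - g x)" by (rule intg, rule lipf_diff[OF assms(1,2)])
    have ab1: "f x - g x \<le> e" for x using assms(3)[of x] by (simp add: abs_le_iff)
    have ab2: "-e \<le> f x - g x" for x using assms(3)[of x] by (simp add: abs_le_iff)
    have "integral\<^sup>L (\<mu>s n) (\<lambda>x. f x - g x) \<le> e"
      by (rule int_le_const[OF P i ab1])
    moreover have "integral\<^sup>L (\<mu>s n) (\<lambda>x. f x - g x) \<ge> -e"
      by (rule int_ge_const[OF P i ab2])
    ultimately show ?thesis unfolding eq by simp
  qed
  moreover have "(\<lambda>n. \<bar>integral\<^sup>L (\<mu>s n) f - integral\<^sup>L (\<mu>s n) g\<bar>) \<longlonglongrightarrow> \<bar>Lim f - Lim g\<bar>"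
    by (intro tendsto_intros Lim_tendsto assms)
  ultimately show ?thesis using LIMSEQ_le_const2 by blast
qed

lemma Lim_nonneg:
  assumes "lipf f" "\<And>x. f x \<ge> 0"
  shows "Lim f \<ge> 0"
proof (rule LIMSEQ_le_const[OF Lim_tendsto[OF assms(1)]])
  show "\<exists>N. \<forall>n\<ge>N. 0 \<le> integral\<^sup>L (\<mu>s n) f"
    using int_ge_const[OF P intg[OF assms(1)]] assms(2) by blast
qed

subsection \<open>Partitions of unity\<close>

definition ep :: "nat \<Rightarrow> real" where "ep k = 1 / real (Suc k)"

lemma ep_pos: "ep k > 0" unfolding ep_def by simp

definition cs :: "nat \<Rightarrow> 'a list" where
  "cs k = (SOME xs. \<forall>y. \<exists>c\<in>set xs. dist c y < ep k)"

lemma cs_cover: "\<exists>c\<in>set (cs k). dist c y < ep k"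
proof -
  have "\<exists>xs::'a list. \<forall>y. \<exists>c\<in>set xs. dist c y < ep k" by (rule cover_list[OF cX ep_pos])
  then have "\<forall>y. \<exists>c\<in>set (cs k). dist c y < ep k" unfolding cs_def by (rule someI_ex)
  then show ?thesis by blast
qed

definition N :: "nat \<Rightarrow> nat" where "N k = length (cs k)"

lemma cs_cover': "\<exists>i<N k. dist (cs k ! i) y < ep k"
  using cs_cover[of k y] unfolding N_def by (auto simp: in_set_conv_nth)

definition rho :: "nat \<Rightarrow> nat \<Rightarrow> 'a \<Rightarrow> real" where
  "rho k i y = min 1 (max 0 (2 - dist (cs k ! i) y / ep k))"

lemma rho_bounds: "0 \<le> rho k i y" "rho k i y \<le> 1"
  unfolding rho_def by auto

lemma rho_one: "dist (cs k ! i) y < ep k \<Longrightarrow> rho k i y = 1"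
  unfolding rho_def using ep_pos[of k] by (auto simp: divide_less_eq)

lemma rho_pos: "rho k i y > 0 \<Longrightarrow> dist (cs k ! i) y < 2 * ep k"
proof -
  assume "rho k i y > 0"
  then have "2 - dist (cs k ! i) y / ep k > 0" unfolding rho_def by linarith
  then have "dist (cs k ! i) y / ep k < 2" by simp
  then show ?thesis using ep_pos[of k] by (simp add: pos_divide_less_eq)
qed

lemma rho_lip: "lipf (rho k i)"
proof (rule lipfI[where L="1 / ep k"], rule lipschitz_onI)
  fix y z :: 'a
  have "\<bar>rho k i y - rho k i z\<bar> \<le> \<bar>(2 - dist (cs k ! i) y / ep k) - (2 - dist (cs k ! i) z / ep k)\<bar>"
    unfolding rho_def by linarith
  also have "\<dots> = \<bar>dist (cs k ! i) y - dist (cs k ! i) z\<bar> / ep k"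
    using ep_pos[of k] by (simp add: diff_divide_distrib[symmetric] abs_minus_commute)
  also have "\<dots> \<le> dist y z / ep k"
    using ep_pos[of k] dist_diff_le by (intro divide_right_mono) auto
  finally show "dist (rho k i y) (rho k i z) \<le> 1 / ep k * dist y z"
    by (simp add: dist_real_def)
qed (use ep_pos in \<open>simp add: less_imp_le\<close>)

definition phi :: "nat \<Rightarrow> nat \<Rightarrow> 'a \<Rightarrow> real" where
  "phi k i y = rho k i y * (\<Prod>j<i. 1 - rho k j y)"

lemma phi_nonneg: "phi k i y \<ge> 0"
  unfolding phi_def using rho_bounds by (intro mult_nonneg_nonneg prod_nonneg) auto

lemma phi_pos: "phi k i y > 0 \<Longrightarrow> dist (cs k ! i) y < 2 * ep k"
proof -
  assume a: "phi k i y > 0"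
  have "rho k i y \<noteq> 0" using a unfolding phi_def by auto
  then have "rho k i y > 0" using rho_bounds[of k i y] by simp
  then show ?thesis by (rule rho_pos)
qed

lemma sum_phi_aux: "(\<Sum>i<n. phi k i y) = 1 - (\<Prod>j<n. 1 - rho k j y)"
  by (induction n) (simp_all add: phi_def algebra_simps)

lemma sum_phi: "(\<Sum>i<N k. phi k i y) = 1"
proof -
  obtain j where j: "j < N k" "dist (cs k ! j) y < ep k" using cs_cover' by blast
  have "(\<Prod>j<N k. 1 - rho k j y) = 0"
    by (rule prod_zero) (use j rho_one in auto)
  then show ?thesis by (simp add: sum_phi_aux)
qed

lemma phi_lip: "lipf (phi k i)"
  unfolding phi_def
  by (intro lipf_mult[OF cX] rho_lip lipf_prod[OF cX] lipf_diff lipf_const) auto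

primrec Phi :: "nat list \<Rightarrow> 'a \<Rightarrow> real" where
  "Phi [] y = 1"
| "Phi (i # p) y = phi (length p) i y * Phi p y"

definition VV :: "nat \<Rightarrow> nat list set" where "VV k = Vt N k"

lemma VV_simps[simp]: "VV 0 = {[]}" "VV (Suc k) = (\<lambda>(i, p). i # p) ` ({..<N k} \<times> VV k)"
  unfolding VV_def by simp_all

lemma V_finite: "finite (VV k)"
  by (induction k) auto

lemma V_length: "p \<in> VV k \<Longrightarrow> length p = k"
  by (induction k arbitrary: p) auto

lemma V_Suc_iff: "i # p \<in> VV (Suc k) \<longleftrightarrow> i < N k \<and> p \<in> VV k"
  by auto

lemma V_SucE: "q \<in> VV (Suc k) \<Longrightarrow> (\<And>i p. q = i # p \<Longrightarrow> i < N k \<Longrightarrow> p \<in> VV k \<Longrightarrow> thesis) \<Longrightarrow> thesis"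
  by auto

lemma Phi_nonneg: "Phi p y \<ge> 0"
  by (induction p) (auto intro: mult_nonneg_nonneg phi_nonneg)

lemma Phi_lip: "lipf (Phi p)"
  by (induction p) (auto intro: lipf_mult[OF cX] lipf_const phi_lip)

lemma sum_Phi: "(\<Sum>p\<in>VV k. Phi p y) = 1"
proof (induction k)
  case 0
  then show ?case by simp
next
  case (Suc k)
  have inj: "inj_on (\<lambda>(i, p). i # p) ({..<N k} \<times> VV k)"
    by (auto simp: inj_on_def)
  have "(\<Sum>p\<in>VV (Suc k). Phi p y) = sum (\<lambda>p. Phi p y) ((\<lambda>(i, p). i # p) ` ({..<N k} \<times> VV k))"
    by simp
  also have "\<dots> = (\<Sum>ip\<in>{..<N k} \<times> VV k. Phi (case ip of (i, p) \<Rightarrow> i # p) y)"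
    by (rule sum.reindex[OF inj, unfolded comp_def])
  also have "\<dots> = (\<Sum>(i, p)\<in>{..<N k} \<times> VV k. phi k i y * Phi p y)"
    by (rule sum.cong) (auto simp: V_length)
  also have "\<dots> = (\<Sum>i<N k. \<Sum>p\<in>VV k. phi k i y * Phi p y)"
    by (rule sum.cartesian_product[symmetric])
  also have "\<dots> = (\<Sum>p\<in>VV k. \<Sum>i<N k. phi k i y * Phi p y)"
    by (rule sum.swap)
  also have "\<dots> = (\<Sum>p\<in>VV k. (\<Sum>i<N k. phi k i y) * Phi p y)"
    by (simp add: sum_distrib_right)
  also have "\<dots> = 1" using Suc by (simp add: sum_phi)
  finally show ?case .
qed

lemma Phi_pos_Cons: "Phi (i # p) y > 0 \<Longrightarrow> Phi p y > 0 \<and> dist (cs (length p) ! i) y < 2 * ep (length p)"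
proof -
  assume a: "Phi (i # p) y > 0"
  then have "phi (length p) i y * Phi p y > 0" by simp
  then have "phi (length p) i y > 0 \<and> Phi p y > 0"
    using phi_nonneg[of "length p" i y] Phi_nonneg[of p y] by (auto simp: zero_less_mult_iff)
  then show ?thesis using phi_pos by blast
qed

lemma Phi_pos_append: "Phi (pre @ p) y > 0 \<Longrightarrow> Phi p y > 0"
proof (induction pre)
  case Nil
  then show ?case by simp
next
  case (Cons a pre)
  have "Phi (a # (pre @ p)) y > 0" using Cons.prems by (simp only: append_Cons)
  then have "Phi (pre @ p) y > 0" using Phi_pos_Cons by blast
  then show ?case by (rule Cons.IH)
qed

definition w :: "nat list \<Rightarrow> real" where "w p = Lim (Phi p)"

lemma w_nonneg: "w p \<ge> 0"
  unfolding w_def by (rule Lim_nonneg[OF Phi_lip Phi_nonneg])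

lemma w_Nil: "w [] = 1"
proof -
  have "Phi [] = (\<lambda>y. 1)" by (rule ext) simp
  then show ?thesis unfolding w_def by (simp add: Lim_const)
qed

lemma w_sum:
  assumes "p \<in> VV k"
  shows "(\<Sum>i<N k. w (i # p)) = w p"
proof -
  have "(\<Sum>i<N k. w (i # p)) = Lim (\<lambda>y. \<Sum>i<N k. Phi (i # p) y)"
    unfolding w_def by (rule Lim_sum[symmetric]) (auto intro: Phi_lip)
  also have "(\<lambda>y. \<Sum>i<N k. Phi (i # p) y) = Phi p"
  proof
    fix y
    have "(\<Sum>i<N k. Phi (i # p) y) = (\<Sum>i<N k. phi k i y) * Phi p y"
      using V_length[OF assms] by (simp add: sum_distrib_right)
    then show "(\<Sum>i<N k. Phi (i # p) y) = Phi p y" by (simp add: sum_phi)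
  qed
  finally show ?thesis unfolding w_def .
qed

lemma w_pos_ex: "w p > 0 \<Longrightarrow> \<exists>y. Phi p y > 0"
proof (rule ccontr)
  assume a: "w p > 0" "\<not> (\<exists>y. Phi p y > 0)"
  then have "Phi p = (\<lambda>y. 0)" using Phi_nonneg[of p] by (auto intro!: ext simp: not_less order.antisym)
  then have "w p = 0" unfolding w_def by (simp add: Lim_const)
  then show False using a by simp
qed

definition lo :: "nat list \<Rightarrow> real" where "lo p = lot w p"

lemma lo_simps[simp]: "lo [] = 0" "lo (i # p) = lo p + (\<Sum>j<i. w (j # p))"
  unfolding lo_def by simp_all

lemma lo_nonneg: "lo p \<ge> 0"
  by (induction p) (auto intro!: add_nonneg_nonneg sum_nonneg w_nonneg)

lemma lo_Cons_w: "lo (i # p) + w (i # p) = lo p + (\<Sum>j<Suc i. w (j # p))"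
  by simp

lemma lo_sub:
  assumes "p \<in> VV k" "i < N k"
  shows "lo p \<le> lo (i # p)" "lo (i # p) + w (i # p) \<le> lo p + w p"
proof -
  show "lo p \<le> lo (i # p)" by (simp add: sum_nonneg w_nonneg)
  have "(\<Sum>j<Suc i. w (j # p)) \<le> (\<Sum>j<N k. w (j # p))"
    by (rule sum_mono2) (use assms(2) w_nonneg in auto)
  then show "lo (i # p) + w (i # p) \<le> lo p + w p"
    unfolding lo_Cons_w w_sum[OF assms(1)] by simp
qed

lemma lo_le1: "p \<in> VV k \<Longrightarrow> lo p + w p \<le> 1"
proof (induction k arbitrary: p)
  case 0
  then show ?case by (simp add: w_Nil)
next
  case (Suc k)
  from Suc.prems obtain i p' where q: "p = i # p'" "i < N k" "p' \<in> VV k" by (rule V_SucE)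
  show ?case using lo_sub(2)[OF q(3,2)] Suc.IH[OF q(3)] q(1) by simp
qed

definition sel :: "nat list \<Rightarrow> real \<Rightarrow> nat" where "sel p u = (LEAST i. u < lo p + (\<Sum>j<Suc i. w (j # p)))"

definition node :: "nat \<Rightarrow> real \<Rightarrow> nat list" where "node k u = nodet w k u"

lemma node_simps[simp]: "node 0 u = []" "node (Suc k) u = sel (node k u) u # node k u"
  unfolding node_def sel_def lo_def by (simp_all add: selt_def)

lemma node_in:
  assumes "0 \<le> u" "u < 1"
  shows "node k u \<in> VV k \<and> lo (node k u) \<le> u \<and> u < lo (node k u) + w (node k u)"
proof (induction k)
  case 0
  then show ?case using assms by (simp add: w_Nil)
next
  case (Suc k)
  define p where "p = node k u"
  have IH: "p \<in> VV k" "lo p \<le> u" "u < lo p + w p" using Suc unfolding p_def by auto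
  define Q where "Q i \<longleftrightarrow> u < lo p + (\<Sum>j<Suc i. w (j # p))" for i
  have Npos: "N k > 0"
  proof (rule ccontr)
    assume "\<not> N k > 0"
    then have "w p = 0" using w_sum[OF IH(1)] by simp
    then show False using IH by simp
  qed
  have "Q (N k - 1)"
    unfolding Q_def using Npos IH(3) w_sum[OF IH(1)] by simp
  then have Qs: "Q (sel p u)" and sle: "sel p u \<le> N k - 1"
    unfolding sel_def Q_def[symmetric] by (auto intro: LeastI Least_le)
  have slt: "sel p u < N k" using sle Npos by simp
  have lo_le: "lo (sel p u # p) \<le> u"
  proof (cases "sel p u")
    case 0
    then show ?thesis using IH by simp
  next
    case (Suc m)
    then have "m < sel p u" by simp
    then have "\<not> Q m" unfolding sel_def Q_def[symmetric] by (rule not_less_Least)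
    then show ?thesis unfolding Q_def using Suc by simp
  qed
  have "node (Suc k) u = sel p u # p" unfolding p_def by simp
  moreover have "sel p u # p \<in> VV (Suc k)"
    unfolding VV_simps by (rule image_eqI[where x="(sel p u, p)"]) (use slt IH(1) in auto)
  moreover have "u < lo (sel p u # p) + w (sel p u # p)"
    using Qs unfolding Q_def lo_Cons_w by simp
  ultimately show ?case using lo_le by simp
qed

lemma node_unique:
  "p \<in> VV k \<Longrightarrow> lo p \<le> u \<Longrightarrow> u < lo p + w p \<Longrightarrow> node k u = p"
proof (induction k arbitrary: p)
  case 0
  then show ?case by simp
next
  case (Suc k)
  from Suc.prems(1) obtain i p' where q: "p = i # p'" "i < N k" "p' \<in> VV k" by (rule V_SucE)
  have a: "lo p' \<le> u" using lo_sub(1)[OF q(3,2)] Suc.prems q(1) by simp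
  have b: "u < lo p' + w p'" using lo_sub(2)[OF q(3,2)] Suc.prems q(1) by simp
  have nk: "node k u = p'" by (rule Suc.IH[OF q(3) a b])
  define Q where "Q m \<longleftrightarrow> u < lo p' + (\<Sum>j<Suc m. w (j # p'))" for m
  have "sel p' u = i"
    unfolding sel_def Q_def[symmetric]
  proof (rule Least_equality)
    show "Q i" unfolding Q_def using Suc.prems(3) q(1) lo_Cons_w[of i p'] by simp
    fix m assume Qm: "Q m"
    show "i \<le> m"
    proof (rule ccontr)
      assume "\<not> i \<le> m"
      then have "Suc m \<le> i" by simp
      then have "(\<Sum>j<Suc m. w (j # p')) \<le> (\<Sum>j<i. w (j # p'))"
        by (intro sum_mono2) (auto simp: w_nonneg)
      then show False using Qm Suc.prems(2) q(1) unfolding Q_def by simp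
    qed
  qed
  then show ?case using nk q(1) by simp
qed

lemma node_eq_iff:
  assumes "0 \<le> u" "u < 1" "p \<in> VV k"
  shows "node k u = p \<longleftrightarrow> lo p \<le> u \<and> u < lo p + w p"
  using node_in[OF assms(1,2), of k] node_unique[OF assms(3)] by auto

lemma node_append: "k \<le> k' \<Longrightarrow> \<exists>pre. node k' u = pre @ node k u"
proof (induction k' rule: dec_induct)
  case base
  then show ?case by (intro exI[of _ "[]"]) simp
next
  case (step k')
  then obtain pre where "node k' u = pre @ node k u" by blast
  then show ?case by (intro exI[of _ "sel (node k' u) u # pre"]) simp
qed

end


definition clu :: "real \<Rightarrow> real" where
  "clu u = (if 0 \<le> u \<and> u < 1 then u else 0)"

lemma clu_in: "0 \<le> clu u" "clu u < 1"
  unfolding clu_def by auto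

lemma clu_meas[measurable]: "clu \<in> borel_measurable borel"
  unfolding clu_def by measurable

definition UM :: "real measure" where "UM = uniform_measure lborel {0..<1}"

lemma UM_Prob: "UM \<in> Prob"
proof -
  have e: "emeasure lborel {0..<1::real} = 1" using emeasure_lborel_Ico[of 0 1] by simp
  have "prob_space UM" unfolding UM_def by (rule prob_space_uniform_measure) (simp_all add: e)
  moreover have "sets UM = sets borel" unfolding UM_def by simp
  ultimately show ?thesis unfolding Prob_def by simp
qed

lemma UM_AE: "AE u in UM. 0 \<le> u \<and> u < 1"
  unfolding UM_def by (rule AE_uniform_measureI) auto

lemma UM_Ico: assumes "0 \<le> a" "a \<le> b" "b \<le> 1" shows "measure UM {a..<b} = b - a"
proof -
  have "emeasure UM {a..<b} = emeasure lborel ({0..<1} \<inter> {a..<b}) / emeasure lborel {0..<1::real}"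
    unfolding UM_def by (rule emeasure_uniform_measure) auto
  also have "{0..<1} \<inter> {a..<b} = {a..<b}" using assms by auto
  also have "emeasure lborel {0..<1::real} = 1" using emeasure_lborel_Ico[of 0 1] by simp
  finally have "emeasure UM {a..<b} = ennreal (b - a)" using assms by (simp add: divide_ennreal_def)
  then show ?thesis using assms by (simp add: measure_def)
qed

lemma UM_integrable:
  assumes "h \<in> borel_measurable borel" "\<And>u. \<bar>h u\<bar> \<le> B"
  shows "integrable UM (h :: real \<Rightarrow> real)"
proof -
  interpret prob_space UM using UM_Prob Prob_D by blast
  show ?thesis
    by (rule integrable_const_bound[where B=B]) (use assms Prob_meas[OF UM_Prob] in auto)
qed

context lim_constr
begin

definition xp :: "nat list \<Rightarrow> 'a" where "xp p = (SOME y. Phi p y > 0)"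

lemma xp_pos: "Phi p y > 0 \<Longrightarrow> Phi p (xp p) > 0"
  unfolding xp_def by (rule someI)

definition gk :: "nat \<Rightarrow> real \<Rightarrow> 'a" where "gk k u = xp (node k (clu u))"

definition g :: "real \<Rightarrow> 'a" where "g u = lim (\<lambda>k. gk k u)"

lemma node_clu: "node k (clu u) \<in> VV k" "lo (node k (clu u)) \<le> clu u" "clu u < lo (node k (clu u)) + w (node k (clu u))"
  using node_in[OF clu_in] by auto

lemma gk_pos: "Phi (node k (clu u)) (gk k u) > 0"
proof -
  have "w (node k (clu u)) > 0" using node_clu(2,3)[where k=k and u=u] by simp
  then obtain y where "Phi (node k (clu u)) y > 0" using w_pos_ex by blast
  then show ?thesis unfolding gk_def by (rule xp_pos)
qed

lemma gk_close: assumes "Suc k \<le> k'" shows "dist (gk k' u) (gk (Suc k) u) < 4 * ep k"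
proof -
  define v where "v = clu u"
  obtain pre where pre: "node k' v = pre @ node (Suc k) v" using node_append[OF assms] by blast
  have len: "length (node k v) = k" using V_length node_clu(1) unfolding v_def by blast
  define c where "c = cs k ! sel (node k v) v"
  have "Phi (node (Suc k) v) (gk k' u) > 0"
    using Phi_pos_append[of pre "node (Suc k) v"] gk_pos[of k' u] pre unfolding v_def by simp
  then have d1: "dist c (gk k' u) < 2 * ep k"
    using Phi_pos_Cons[of "sel (node k v) v" "node k v"] len unfolding c_def by simp
  have "Phi (node (Suc k) v) (gk (Suc k) u) > 0" using gk_pos unfolding v_def by blast
  then have d2: "dist c (gk (Suc k) u) < 2 * ep k"
    using Phi_pos_Cons[of "sel (node k v) v" "node k v"] len unfolding c_def by simp
  have "dist (gk k' u) (gk (Suc k) u) \<le> dist c (gk k' u) + dist c (gk (Suc k) u)"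
    using dist_triangle2[of "gk k' u" "gk (Suc k) u" c] by (simp add: dist_commute)
  then show ?thesis using d1 d2 by simp
qed

lemma ep_small: "e > 0 \<Longrightarrow> \<exists>k. ep k < e"
  using reals_Archimedean unfolding ep_def by (simp add: inverse_eq_divide)

lemma gk_Cauchy: "Cauchy (\<lambda>k. gk k u)"
proof (rule metric_CauchyI)
  fix e :: real assume "e > 0"
  then obtain k where k: "ep k < e / 8" using ep_small[of "e/8"] by auto
  show "\<exists>M. \<forall>m\<ge>M. \<forall>n\<ge>M. dist (gk m u) (gk n u) < e"
  proof (intro exI allI impI)
    fix m n assume "Suc k \<le> m" "Suc k \<le> n"
    then have "dist (gk m u) (gk (Suc k) u) < 4 * ep k" "dist (gk n u) (gk (Suc k) u) < 4 * ep k"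
      using gk_close by auto
    moreover have "dist (gk m u) (gk n u) \<le> dist (gk m u) (gk (Suc k) u) + dist (gk n u) (gk (Suc k) u)"
      by (rule dist_triangle2)
    ultimately show "dist (gk m u) (gk n u) < e" using k by simp
  qed
qed

lemma complete_UNIV: "uniform_space_class.complete (UNIV::'a set)"
  using cX unfolding compact_eq_totally_bounded by blast

lemma g_tendsto: "(\<lambda>k. gk k u) \<longlonglongrightarrow> g u"
proof -
  obtain l where "(\<lambda>k. gk k u) \<longlonglongrightarrow> l"
    using complete_UNIV gk_Cauchy unfolding complete_def by blast
  then have "convergent (\<lambda>k. gk k u)" unfolding convergent_def by blast
  then show ?thesis unfolding g_def by (simp add: convergent_LIMSEQ_iff)
qed

lemma g_close: "dist (g u) (gk (Suc k) u) \<le> 4 * ep k"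
proof (rule LIMSEQ_le_const2)
  show "(\<lambda>k'. dist (gk k' u) (gk (Suc k) u)) \<longlonglongrightarrow> dist (g u) (gk (Suc k) u)"
    by (intro tendsto_intros g_tendsto)
  show "\<exists>N. \<forall>n\<ge>N. dist (gk n u) (gk (Suc k) u) \<le> 4 * ep k"
    using gk_close by (intro exI[of _ "Suc k"]) (auto intro: less_imp_le)
qed

lemma sel_meas: "sel p \<in> borel \<rightarrow>\<^sub>M count_space UNIV"
  unfolding sel_def by (rule measurable_Least) measurable

lemma node_meas: "node k \<in> borel \<rightarrow>\<^sub>M count_space UNIV"
proof (induction k)
  case 0
  then show ?case by simp
next
  case (Suc k)
  have "(\<lambda>u. (\<lambda>p u. sel p u # p) (node k u) u) \<in> borel \<rightarrow>\<^sub>M count_space UNIV"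
  proof (rule measurable_compose_countable[OF _ Suc])
    fix p
    show "(\<lambda>u. sel p u # p) \<in> borel \<rightarrow>\<^sub>M count_space UNIV"
      using measurable_compose[OF sel_meas[of p], of "\<lambda>i. i # p" "count_space UNIV"] by simp
  qed
  then show ?case by simp
qed

lemma gk_meas: "gk k \<in> borel_measurable borel"
proof -
  have "(\<lambda>u. xp (node k (clu u))) \<in> borel_measurable borel"
    using measurable_compose[OF measurable_compose[OF clu_meas node_meas], of xp borel] by simp
  then show ?thesis unfolding gk_def[abs_def] .
qed

lemma g_meas: "g \<in> borel_measurable borel"
  by (rule borel_measurable_LIMSEQ_metric[OF gk_meas g_tendsto])

definition mu :: "'a measure" where "mu = distr UM borel g"

lemma mu_Prob: "mu \<in> Prob"
proof -
  interpret prob_space UM using UM_Prob Prob_D by blast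
  have gm: "g \<in> UM \<rightarrow>\<^sub>M borel" using Prob_meas[OF UM_Prob g_meas] .
  have "prob_space mu" unfolding mu_def by (rule prob_space_distr[OF gm])
  then show ?thesis unfolding Prob_def mu_def by simp
qed

lemma lim_eq:
  assumes f: "L-lipschitz_on UNIV f"
  shows "Lim f = integral\<^sup>L mu f"
proof -
  have L: "L \<ge> 0" using f lipschitz_on_nonneg by blast
  have lf: "lipf f" using f by (rule lipfI)
  have fm: "f \<in> borel_measurable borel" by (rule borel_measurable_continuous_onI[OF lipf_cont[OF lf]])
  obtain B where B: "\<And>x. \<bar>f x\<bar> \<le> B" using cont_bounded[OF cX lipf_cont[OF lf]] by blast
  have fd: "\<bar>f x - f y\<bar> \<le> L * dist x y" for x y
    using lipschitz_onD[OF f] by (simp add: dist_real_def)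
  have main: "\<bar>Lim f - integral\<^sup>L mu f\<bar> \<le> 8 * L * ep k" for k
  proof -
    have I: "integral\<^sup>L mu f = integral\<^sup>L UM (\<lambda>u. f (g u))"
      unfolding mu_def by (rule integral_distr[OF Prob_meas[OF UM_Prob g_meas] fm])
    have ig: "integrable UM (\<lambda>u. f (g u))"
      by (rule UM_integrable[where B=B]) (use B fm g_meas in auto)
    have igk: "integrable UM (\<lambda>u. f (gk (Suc k) u))"
      by (rule UM_integrable[where B=B]) (use B fm gk_meas in auto)
    have pw: "\<bar>f (g u) - f (gk (Suc k) u)\<bar> \<le> L * (4 * ep k)" for u
      using fd[of "g u" "gk (Suc k) u"] g_close[of u k] L by (meson mult_left_mono order_trans)
    have pw1: "f (g u) - f (gk (Suc k) u) \<le> L * (4 * ep k)" for u using pw[of u] by (smt (verit))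
    have pw2: "- (L * (4 * ep k)) \<le> f (g u) - f (gk (Suc k) u)" for u using pw[of u] by (smt (verit))
    have id: "integrable UM (\<lambda>u. f (g u) - f (gk (Suc k) u))" using ig igk by simp
    have "integral\<^sup>L UM (\<lambda>u. f (g u) - f (gk (Suc k) u)) \<le> L * (4 * ep k)"
      by (rule int_le_const[OF UM_Prob id pw1])
    moreover have "integral\<^sup>L UM (\<lambda>u. f (g u) - f (gk (Suc k) u)) \<ge> - (L * (4 * ep k))"
      by (rule int_ge_const[OF UM_Prob id pw2])
    moreover have "integral\<^sup>L UM (\<lambda>u. f (g u) - f (gk (Suc k) u)) =
        integral\<^sup>L UM (\<lambda>u. f (g u)) - integral\<^sup>L UM (\<lambda>u. f (gk (Suc k) u))"
      by (rule Bochner_Integration.integral_diff[OF ig igk])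
    ultimately have II: "\<bar>integral\<^sup>L UM (\<lambda>u. f (g u)) - integral\<^sup>L UM (\<lambda>u. f (gk (Suc k) u))\<bar> \<le> L * (4 * ep k)"
      by simp
    define K where "K = Suc k"
    define Ip where "Ip p = {lo p..<lo p + w p}" for p
    have rep: "f (gk K u) = (\<Sum>p\<in>VV K. f (xp p) * indicator (Ip p) (clu u))" for u
    proof -
      have "(\<Sum>p\<in>VV K. f (xp p) * indicator (Ip p) (clu u)) =
            (\<Sum>p\<in>VV K. if node K (clu u) = p then f (xp p) else 0)"
        by (rule sum.cong[OF refl]) (auto simp: Ip_def node_eq_iff[OF clu_in] indicator_def)
      also have "\<dots> = f (xp (node K (clu u)))" using V_finite node_clu(1)[of K u] by (simp add: sum.delta)
      finally show ?thesis unfolding gk_def by simp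
    qed
    have Ipm: "measure UM (Ip p) = w p" if "p \<in> VV K" for p
      unfolding Ip_def using lo_nonneg[of p] w_nonneg[of p] lo_le1[OF that]
      by (subst UM_Ico) auto
    have "integral\<^sup>L UM (\<lambda>u. f (gk K u)) = integral\<^sup>L UM (\<lambda>u. \<Sum>p\<in>VV K. f (xp p) * indicator (Ip p) (clu u))"
      by (simp add: rep)
    also have "\<dots> = (\<Sum>p\<in>VV K. integral\<^sup>L UM (\<lambda>u. f (xp p) * indicator (Ip p) (clu u)))"
      by (rule Bochner_Integration.integral_sum, rule UM_integrable[where B="\<bar>f (xp p)\<bar>" for p])
         (auto simp: Ip_def indicator_def)
    also have "\<dots> = (\<Sum>p\<in>VV K. f (xp p) * integral\<^sup>L UM (\<lambda>u. indicator (Ip p) (clu u)))"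
      by simp
    also have "\<dots> = (\<Sum>p\<in>VV K. f (xp p) * integral\<^sup>L UM (indicator (Ip p)))"
    proof (rule sum.cong[OF refl])
      fix p
      have "integral\<^sup>L UM (\<lambda>u. indicator (Ip p) (clu u)) = integral\<^sup>L UM (\<lambda>u. indicator (Ip p) u :: real)"
      proof (rule integral_cong_AE)
        show "(\<lambda>u. indicator (Ip p) (clu u) :: real) \<in> borel_measurable UM"
          by (rule Prob_meas[OF UM_Prob]) (unfold Ip_def, measurable)
        show "(\<lambda>u. indicator (Ip p) u :: real) \<in> borel_measurable UM"
          by (rule Prob_meas[OF UM_Prob]) (unfold Ip_def, measurable)
        show "AE u in UM. indicator (Ip p) (clu u) = (indicator (Ip p) u :: real)"
          using UM_AE by eventually_elim (simp add: clu_def)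
      qed
      then show "f (xp p) * integral\<^sup>L UM (\<lambda>u. indicator (Ip p) (clu u)) = f (xp p) * integral\<^sup>L UM (indicator (Ip p))"
        by simp
    qed
    also have "\<dots> = (\<Sum>p\<in>VV K. f (xp p) * w p)"
      by (rule sum.cong[OF refl]) (simp add: Ipm Prob_space[OF UM_Prob])
    finally have III: "integral\<^sup>L UM (\<lambda>u. f (gk K u)) = (\<Sum>p\<in>VV K. f (xp p) * w p)" .
    define G where "G y = (\<Sum>p\<in>VV K. f (xp p) * Phi p y)" for y
    have lG: "lipf G" unfolding G_def[abs_def]
      by (intro lipf_sum V_finite lipf_cmult Phi_lip)
    have LimG: "Lim G = (\<Sum>p\<in>VV K. f (xp p) * w p)"
      unfolding G_def[abs_def] w_def
      by (subst Lim_sum) (auto intro: V_finite lipf_cmult Phi_lip simp: Lim_cmult[OF Phi_lip])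
    have bnd: "\<bar>f y - G y\<bar> \<le> L * (4 * ep k)" for y
    proof -
      have "(\<Sum>p\<in>VV K. (f y - f (xp p)) * Phi p y) = f y * (\<Sum>p\<in>VV K. Phi p y) - G y"
        unfolding G_def by (simp add: left_diff_distrib sum_subtractf sum_distrib_left)
      then have "f y - G y = (\<Sum>p\<in>VV K. (f y - f (xp p)) * Phi p y)"
        using sum_Phi[where k=K and y=y] by simp
      then have "\<bar>f y - G y\<bar> \<le> (\<Sum>p\<in>VV K. \<bar>(f y - f (xp p)) * Phi p y\<bar>)"
        by (simp add: sum_abs)
      also have "\<dots> \<le> (\<Sum>p\<in>VV K. (L * (4 * ep k)) * Phi p y)"
      proof (rule sum_mono)
        fix p assume pV: "p \<in> VV K"
        show "\<bar>(f y - f (xp p)) * Phi p y\<bar> \<le> (L * (4 * ep k)) * Phi p y"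
        proof (cases "Phi p y > 0")
          case True
          from pV obtain i p' where q: "p = i # p'" "i < N k" "p' \<in> VV k" unfolding K_def by (rule V_SucE)
          have lp: "length p' = k" using V_length[OF q(3)] .
          have "Phi p (xp p) > 0" using xp_pos[OF True] .
          then have d1: "dist (cs k ! i) (xp p) < 2 * ep k" using Phi_pos_Cons q(1) lp by blast
          have d2: "dist (cs k ! i) y < 2 * ep k" using Phi_pos_Cons True q(1) lp by blast
          have "dist y (xp p) \<le> dist (cs k ! i) y + dist (cs k ! i) (xp p)"
            using dist_triangle2[of y "xp p" "cs k ! i"] by (simp add: dist_commute)
          then have "dist y (xp p) \<le> 4 * ep k" using d1 d2 by simp
          then have "\<bar>f y - f (xp p)\<bar> \<le> L * (4 * ep k)"
            using fd[of y "xp p"] L by (meson mult_left_mono order_trans)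
          then show ?thesis using Phi_nonneg[of p y] by (simp add: abs_mult mult_right_mono)
        next
          case False
          then have "Phi p y = 0" using Phi_nonneg[of p y] by simp
          then show ?thesis by simp
        qed
      qed
      also have "\<dots> = L * (4 * ep k)" using sum_Phi[where k=K and y=y] by (simp add: sum_distrib_left[symmetric])
      finally show ?thesis .
    qed
    have IV: "\<bar>Lim f - Lim G\<bar> \<le> L * (4 * ep k)" by (rule Lim_bound[OF lf lG bnd])
    show ?thesis using I II III IV LimG unfolding K_def by linarith
  qed
  show ?thesis
  proof (rule ccontr)
    assume ne: "Lim f \<noteq> integral\<^sup>L mu f"
    define a where "a = \<bar>Lim f - integral\<^sup>L mu f\<bar>"
    have a: "a > 0" using ne unfolding a_def by simp
    obtain k where k: "ep k < a / (8 * L + 1)" using ep_small[of "a / (8 * L + 1)"] a L by auto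
    have "8 * L * ep k \<le> (8 * L + 1) * ep k" using ep_pos[of k] by simp
    also have "\<dots> < a" using k L by (simp add: field_simps)
    finally show False using main[of k] unfolding a_def by simp
  qed
qed

end

lemma limit_measure_exists:
  fixes \<mu>s :: "nat \<Rightarrow> 'a::metric_space measure"
  assumes "compact (UNIV::'a set)" "\<And>n. \<mu>s n \<in> Prob"
    "\<And>f. lipf f \<Longrightarrow> convergent (\<lambda>n. integral\<^sup>L (\<mu>s n) f)"
  shows "\<exists>\<mu>\<in>Prob. \<forall>f. lipf f \<longrightarrow> (\<lambda>n. integral\<^sup>L (\<mu>s n) f) \<longlonglongrightarrow> integral\<^sup>L \<mu> f"
proof -
  interpret lim_constr \<mu>s using assms by unfold_locales
  show ?thesis
  proof (intro bexI[of _ mu] allI impI)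
    fix f :: "'a \<Rightarrow> real" assume "lipf f"
    then obtain L where "L-lipschitz_on UNIV f" unfolding lipf_def by blast
    then show "(\<lambda>n. integral\<^sup>L (\<mu>s n) f) \<longlonglongrightarrow> integral\<^sup>L mu f"
      using Lim_tendsto[OF \<open>lipf f\<close>] lim_eq by simp
  qed (rule mu_Prob)
qed


locale ifs =
  fixes \<tau> :: "'l::metric_space \<Rightarrow> 'x::metric_space \<Rightarrow> 'x"
    and q :: "'x \<Rightarrow> 'l measure"
    and M :: nat and s r t :: real
  assumes cX: "compact (UNIV :: 'x set)"
    and cL: "compact (UNIV :: 'l set)"
    and tau_cont: "continuous_on UNIV (\<lambda>p :: 'l \<times> 'x. \<tau> (fst p) (snd p))"
    and q_prob: "\<And>x. q x \<in> Prob"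
    and W1: "\<And>l. 1-lipschitz_on UNIV (\<tau> l)"
    and M1: "M \<ge> 1" and s0: "0 < s" and s1: "s < 1"
    and CPM: "\<And>ls. length ls = M \<Longrightarrow> s-lipschitz_on UNIV (tau_seq \<tau> ls)"
    and r0: "r \<ge> 0" and H2: "\<And>l1 l2 x. dist (\<tau> l1 x) (\<tau> l2 x) \<le> r * dist l1 l2"
    and t0: "t \<ge> 0" and H3: "\<And>x y. dMK (q x) (q y) \<le> t * dist x y"
    and H4: "\<And>A x. open A \<Longrightarrow> A \<noteq> {} \<Longrightarrow> measure (q x) A > 0"
    and small: "s + r * real M * t < 1"
begin

abbreviation B :: "('x \<Rightarrow> real) \<Rightarrow> 'x \<Rightarrow> real" where "B \<equiv> transfer_op q \<tau>"

lemma B_def: "B h x = integral\<^sup>L (q x) (\<lambda>l. h (\<tau> l x))"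
  unfolding transfer_op_def by simp

lemma tau_dist: "dist (\<tau> l x) (\<tau> l y) \<le> dist x y"
  using lipschitz_onD[OF W1, of x y l] by simp

lemma tau_cont_l: "continuous_on UNIV (\<lambda>l. \<tau> l x)"
proof -
  have c1: "continuous_on UNIV (\<lambda>l::'l. (l, x))" by (intro continuous_intros)
  have c2: "continuous_on ((\<lambda>l::'l. (l, x)) ` UNIV) (\<lambda>p :: 'l \<times> 'x. \<tau> (fst p) (snd p))"
    by (rule continuous_on_subset[OF tau_cont subset_UNIV])
  have "continuous_on UNIV ((\<lambda>p :: 'l \<times> 'x. \<tau> (fst p) (snd p)) \<circ> (\<lambda>l. (l, x)))"
    by (rule continuous_on_compose[OF c1 c2])
  then show ?thesis by (simp add: comp_def)
qed

lemma tau_meas_l: "(\<lambda>l. \<tau> l x) \<in> borel_measurable borel"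
  by (rule borel_measurable_continuous_onI[OF tau_cont_l])

lemma comp_tau_lip:
  assumes "L-lipschitz_on UNIV h"
  shows "(L * r)-lipschitz_on UNIV (\<lambda>l. h (\<tau> l x))"
proof (rule lipschitz_onI)
  have L: "L \<ge> 0" using assms lipschitz_on_nonneg by blast
  then show "0 \<le> L * r" using r0 by simp
  fix l1 l2
  have "dist (h (\<tau> l1 x)) (h (\<tau> l2 x)) \<le> L * dist (\<tau> l1 x) (\<tau> l2 x)"
    using lipschitz_onD[OF assms] by simp
  also have "\<dots> \<le> L * (r * dist l1 l2)" using H2 L by (intro mult_left_mono) auto
  finally show "dist (h (\<tau> l1 x)) (h (\<tau> l2 x)) \<le> L * r * dist l1 l2" by (simp add: mult.assoc)
qed

lemma comp_tau_cont:
  assumes "continuous_on UNIV h"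
  shows "continuous_on UNIV (\<lambda>l. h (\<tau> l x))"
  using continuous_on_compose[OF tau_cont_l continuous_on_subset[OF assms]] by (simp add: comp_def)

lemma int_comp_tau: "continuous_on UNIV h \<Longrightarrow> integrable (q z) (\<lambda>l. h (\<tau> l x) :: real)"
  by (rule integrable_cont[OF cL q_prob comp_tau_cont])

lemma one_step:
  assumes h: "L-lipschitz_on UNIV h"
    and c: "\<And>l. h (\<tau> l x) - h (\<tau> l y) \<le> c"
  shows "B h x - B h y \<le> c + L * r * t * dist x y"
proof -
  have L: "L \<ge> 0" using h lipschitz_on_nonneg by blast
  have hc: "continuous_on UNIV h" using h lipschitz_on_continuous_on by blast
  have i1: "integrable (q x) (\<lambda>l. h (\<tau> l x))" "integrable (q x) (\<lambda>l. h (\<tau> l y))"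
    by (rule int_comp_tau[OF hc])+
  have "integral\<^sup>L (q x) (\<lambda>l. h (\<tau> l x)) - integral\<^sup>L (q x) (\<lambda>l. h (\<tau> l y))
        = integral\<^sup>L (q x) (\<lambda>l. h (\<tau> l x) - h (\<tau> l y))"
    by (rule Bochner_Integration.integral_diff[OF i1, symmetric])
  also have "\<dots> \<le> c"
    by (rule int_le_const[OF q_prob Bochner_Integration.integrable_diff[OF i1] c])
  finally have 1: "integral\<^sup>L (q x) (\<lambda>l. h (\<tau> l x)) - integral\<^sup>L (q x) (\<lambda>l. h (\<tau> l y)) \<le> c" .
  have "integral\<^sup>L (q x) (\<lambda>l. h (\<tau> l y)) - integral\<^sup>L (q y) (\<lambda>l. h (\<tau> l y)) \<le> (L * r) * dMK (q x) (q y)"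
    by (rule dMK_lip[OF cL q_prob q_prob comp_tau_lip[OF h]])
  also have "\<dots> \<le> (L * r) * (t * dist x y)"
    using H3[of x y] L r0 by (intro mult_left_mono) simp_all
  finally have 2: "integral\<^sup>L (q x) (\<lambda>l. h (\<tau> l y)) - integral\<^sup>L (q y) (\<lambda>l. h (\<tau> l y)) \<le> L * r * t * dist x y"
    by (simp add: mult.assoc)
  show ?thesis unfolding B_def using 1 2 by linarith
qed

lemma B_lip:
  assumes h: "L-lipschitz_on UNIV h"
  shows "(L * (1 + r * t))-lipschitz_on UNIV (B h)"
proof (rule lipschitz_onI)
  have L: "L \<ge> 0" using h lipschitz_on_nonneg by blast
  then show "0 \<le> L * (1 + r * t)" using r0 t0 by simp
  have le: "B h x - B h y \<le> L * (1 + r * t) * dist x y" for x y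
  proof -
    have "B h x - B h y \<le> L * dist x y + L * r * t * dist x y"
    proof (rule one_step[OF h])
      fix l
      have "h (\<tau> l x) - h (\<tau> l y) \<le> dist (h (\<tau> l x)) (h (\<tau> l y))" by (simp add: dist_real_def)
      also have "\<dots> \<le> L * dist (\<tau> l x) (\<tau> l y)" using lipschitz_onD[OF h] by simp
      also have "\<dots> \<le> L * dist x y" using tau_dist L by (intro mult_left_mono) auto
      finally show "h (\<tau> l x) - h (\<tau> l y) \<le> L * dist x y" .
    qed
    then show ?thesis by (simp add: algebra_simps)
  qed
  fix x y
  show "dist (B h x) (B h y) \<le> L * (1 + r * t) * dist x y"
    using le[of x y] le[of y x] unfolding dist_real_def by (simp add: dist_commute abs_le_iff)
qed

lemma B_lipf: "lipf h \<Longrightarrow> lipf (B h)"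
proof -
  assume "lipf h"
  then obtain L where "L-lipschitz_on UNIV h" unfolding lipf_def by blast
  from B_lip[OF this] show "lipf (B h)" by (rule lipfI)
qed

definition K :: "'x \<Rightarrow> 'x measure" where "K x = distr (q x) borel (\<lambda>l. \<tau> l x)"

lemma tau_meas_q: "(\<lambda>l. \<tau> l x) \<in> q x \<rightarrow>\<^sub>M borel"
  using Prob_meas[OF q_prob tau_meas_l] .

lemma K_Prob: "K x \<in> Prob"
proof -
  interpret prob_space "q x" by (rule Prob_D(1)[OF q_prob])
  have "prob_space (K x)" unfolding K_def by (rule prob_space_distr[OF tau_meas_q])
  then show ?thesis unfolding Prob_def K_def by simp
qed

lemma K_int: assumes "(f :: 'x \<Rightarrow> real) \<in> borel_measurable borel" shows "integral\<^sup>L (K x) f = integral\<^sup>L (q x) (\<lambda>l. f (\<tau> l x))"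
  unfolding K_def by (rule integral_distr[OF tau_meas_q assms])

lemma K_int_B: "continuous_on UNIV f \<Longrightarrow> integral\<^sup>L (K x) f = B f x"
  using K_int[OF borel_measurable_continuous_onI] B_def by simp

lemma K_emeasure: "A \<in> sets borel \<Longrightarrow> emeasure (K x) A = emeasure (q x) ((\<lambda>l. \<tau> l x) -` A \<inter> space (q x))"
  unfolding K_def by (rule emeasure_distr[OF tau_meas_q])

lemma K_meas: "K \<in> borel \<rightarrow>\<^sub>M subprob_algebra borel"
proof (rule measurable_subprob_algebra_generated[where G="Collect closed" and \<Omega>=UNIV])
  show "sets borel = sigma_sets UNIV (Collect closed)" by (rule sets_borel_closed)
  show "Int_stable (Collect closed)" by (auto simp: Int_stable_def)
  show "Collect closed \<subseteq> Pow UNIV" by auto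
  show "subprob_space (K a)" for a by (rule prob_space_imp_subprob_space[OF Prob_D(1)[OF K_Prob]])
  show "sets (K a) = sets borel" for a by (rule Prob_D(2)[OF K_Prob])
  show "(\<lambda>a. emeasure (K a) UNIV) \<in> borel_measurable borel"
  proof -
    have "emeasure (K a) UNIV = 1" for a
    proof -
      interpret prob_space "K a" by (rule Prob_D(1)[OF K_Prob])
      show ?thesis using emeasure_space_1 Prob_space[OF K_Prob] by simp
    qed
    then show ?thesis by simp
  qed
  fix A :: "'x set" assume "A \<in> Collect closed"
  then have A: "closed A" by simp
  show "(\<lambda>a. emeasure (K a) A) \<in> borel_measurable borel"
  proof (cases "A = {}")
    case True
    then show ?thesis by simp
  next
    case False
    have lim: "(\<lambda>m. B (happ A m) a) \<longlonglongrightarrow> measure (K a) A" for a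
      using happ_integral_tendsto[OF K_Prob A False, of a] K_int_B[OF lipf_cont[OF happ_lipf]] by simp
    have "(\<lambda>a. measure (K a) A) \<in> borel_measurable borel"
    proof (rule borel_measurable_LIMSEQ_real[OF lim])
      fix m
      show "B (happ A m) \<in> borel_measurable borel"
        by (rule borel_measurable_continuous_onI[OF lipf_cont[OF B_lipf[OF happ_lipf]]])
    qed
    then have "(\<lambda>a. ennreal (measure (K a) A)) \<in> borel_measurable borel" by measurable
    moreover have "emeasure (K a) A = ennreal (measure (K a) A)" for a
    proof -
      interpret prob_space "K a" by (rule Prob_D(1)[OF K_Prob])
      show ?thesis by (rule emeasure_eq_measure)
    qed
    ultimately show ?thesis by simp
  qed
qed

subsection \<open>Markov operator\<close>

abbreviation T :: "'x measure \<Rightarrow> 'x measure" where "T \<equiv> markov_op q \<tau>"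

lemma K_meas_mu: "\<mu> \<in> Prob \<Longrightarrow> K \<in> \<mu> \<rightarrow>\<^sub>M subprob_algebra borel"
  using K_meas measurable_cong_sets[OF Prob_D(2) refl] by blast

lemma bind_Prob: assumes "\<mu> \<in> Prob" shows "bind \<mu> K \<in> Prob"
proof -
  interpret prob_space \<mu> by (rule Prob_D(1)[OF assms])
  have ne: "space \<mu> \<noteq> {}" using Prob_space[OF assms] by simp
  have "prob_space (bind \<mu> K)"
    by (rule prob_space_bind[OF _ K_meas_mu[OF assms]]) (intro AE_I2 Prob_D(1)[OF K_Prob])
  moreover have "sets (bind \<mu> K) = sets borel"
    by (rule sets_bind_measurable[OF K_meas_mu[OF assms] ne])
  ultimately show ?thesis unfolding Prob_def by simp
qed

lemma bind_int:
  assumes "\<mu> \<in> Prob" "continuous_on UNIV f"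
  shows "integral\<^sup>L (bind \<mu> K) f = integral\<^sup>L \<mu> (B f)"
proof -
  interpret prob_space \<mu> by (rule Prob_D(1)[OF assms(1)])
  obtain C where C: "\<And>x. \<bar>f x\<bar> \<le> C" using cont_bounded[OF cX assms(2)] by blast
  have "integral\<^sup>L (bind \<mu> K) f = integral\<^sup>L \<mu> (\<lambda>x. integral\<^sup>L (K x) f)"
  proof (rule integral_bind[OF _ _ K_meas_mu[OF assms(1)]])
    show "f \<in> borel_measurable borel" by (rule borel_measurable_continuous_onI[OF assms(2)])
    show "\<bar>f x\<bar> \<le> C" for x by (rule C)
    show "finite_measure \<mu>" by (rule finite_measure_axioms)
    show "AE x in \<mu>. emeasure (K x) (space (K x)) \<le> ennreal 1"
    proof (intro AE_I2)
      fix x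
      interpret kx: prob_space "K x" by (rule Prob_D(1)[OF K_Prob])
      show "emeasure (K x) (space (K x)) \<le> ennreal 1" by (simp add: kx.emeasure_space_1)
    qed
  qed
  also have "\<dots> = integral\<^sup>L \<mu> (B f)"
    using K_int_B[OF assms(2)] by simp
  finally show ?thesis .
qed

lemma T_eq_bind: assumes "\<mu> \<in> Prob" shows "T \<mu> = bind \<mu> K"
  unfolding markov_op_def
proof (rule the_equality)
  show "bind \<mu> K \<in> Prob \<and> (\<forall>f. continuous_on UNIV f \<longrightarrow> integral\<^sup>L (bind \<mu> K) f = integral\<^sup>L \<mu> (transfer_op q \<tau> f))"
    using bind_Prob[OF assms] bind_int[OF assms] by simp
  fix \<nu> assume a: "\<nu> \<in> Prob \<and> (\<forall>f. continuous_on UNIV f \<longrightarrow> integral\<^sup>L \<nu> f = integral\<^sup>L \<mu> (transfer_op q \<tau> f))"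
  show "\<nu> = bind \<mu> K"
  proof (rule Prob_eqI_lip[OF cX _ bind_Prob[OF assms]])
    show "\<nu> \<in> Prob" using a by blast
    fix f :: "'x \<Rightarrow> real" assume "lipf f"
    then have "continuous_on UNIV f" by (rule lipf_cont)
    then show "integral\<^sup>L \<nu> f = integral\<^sup>L (bind \<mu> K) f" using a bind_int[OF assms] by simp
  qed
qed

lemma T_Prob: "\<mu> \<in> Prob \<Longrightarrow> T \<mu> \<in> Prob"
  by (subst T_eq_bind) (auto intro: bind_Prob)

lemma T_int: "\<mu> \<in> Prob \<Longrightarrow> continuous_on UNIV f \<Longrightarrow> integral\<^sup>L (T \<mu>) f = integral\<^sup>L \<mu> (B f)"
  by (subst T_eq_bind) (auto intro: bind_int)

lemma T_emeasure: assumes "\<mu> \<in> Prob" "A \<in> sets borel"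
  shows "emeasure (T \<mu>) A = (\<integral>\<^sup>+ x. emeasure (K x) A \<partial>\<mu>)"
proof -
  have ne: "space \<mu> \<noteq> {}" using Prob_space[OF assms(1)] by simp
  show ?thesis unfolding T_eq_bind[OF assms(1)] by (rule emeasure_bind[OF ne K_meas_mu[OF assms(1)] assms(2)])
qed

lemma Tn_Prob: "\<mu> \<in> Prob \<Longrightarrow> (T ^^ n) \<mu> \<in> Prob"
  by (induction n) (auto intro: T_Prob)

lemma Tn_int: "\<mu> \<in> Prob \<Longrightarrow> lipf f \<Longrightarrow> integral\<^sup>L ((T ^^ n) \<mu>) f = integral\<^sup>L \<mu> ((B ^^ n) f)"
proof (induction n arbitrary: f)
  case 0
  then show ?case by simp
next
  case (Suc n)
  have "integral\<^sup>L ((T ^^ Suc n) \<mu>) f = integral\<^sup>L (T ((T ^^ n) \<mu>)) f" by simp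
  also have "\<dots> = integral\<^sup>L ((T ^^ n) \<mu>) (B f)"
    by (rule T_int[OF Tn_Prob[OF Suc.prems(1)] lipf_cont[OF Suc.prems(2)]])
  also have "\<dots> = integral\<^sup>L \<mu> ((B ^^ n) (B f))"
    by (rule Suc.IH[OF Suc.prems(1) B_lipf[OF Suc.prems(2)]])
  also have "(B ^^ n) (B f) = (B ^^ Suc n) f" by (simp add: funpow_swap1)
  finally show ?case .
qed

end


function bseq :: "real \<Rightarrow> (nat \<Rightarrow> real) \<Rightarrow> nat \<Rightarrow> real" where
  "bseq c a n = a n + c * (\<Sum>i<n. a i * bseq c a (n - 1 - i))"
  by auto
termination by (relation "Wellfounded.measure (\<lambda>(c, a, n). n)") auto

declare bseq.simps[simp del]

lemma bseq_nonneg: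
  assumes "c \<ge> 0" "\<And>i. a i \<ge> 0"
  shows "bseq c a n \<ge> 0"
proof (induction n rule: less_induct)
  case (less n)
  have "(\<Sum>i<n. a i * bseq c a (n - 1 - i)) \<ge> 0"
    by (rule sum_nonneg) (use less assms in \<open>auto intro!: mult_nonneg_nonneg\<close>)
  then show ?case using assms by (subst bseq.simps) (auto intro!: add_nonneg_nonneg mult_nonneg_nonneg)
qed

lemma sum_split_add: "(\<Sum>i<m + k. f i) = (\<Sum>i<m. f i) + (\<Sum>i<k. f (m + i :: nat)) "
  for f :: "nat \<Rightarrow> real"
  by (induction k) (simp_all add: add.assoc)

lemma conv_eq:
  fixes a b :: "nat \<Rightarrow> real"
  shows "(\<Sum>n<N. \<Sum>i<n. a i * b (n - 1 - i)) = (\<Sum>i<N. a i * (\<Sum>j<N - 1 - i. b j))"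
proof (induction N)
  case 0
  then show ?case by simp
next
  case (Suc N)
  have "(\<Sum>n<Suc N. \<Sum>i<n. a i * b (n - 1 - i)) = (\<Sum>i<N. a i * (\<Sum>j<N - 1 - i. b j)) + (\<Sum>i<N. a i * b (N - 1 - i))"
    using Suc by simp
  also have "\<dots> = (\<Sum>i<N. a i * (\<Sum>j<N - i. b j))"
  proof -
    have "(\<Sum>j<N - i. b j) = (\<Sum>j<N - 1 - i. b j) + b (N - 1 - i)" if "i < N" for i
    proof -
      have "N - i = Suc (N - 1 - i)" using that by simp
      then show ?thesis by simp
    qed
    then show ?thesis by (simp add: sum.distrib[symmetric] distrib_left)
  qed
  also have "\<dots> = (\<Sum>i<Suc N. a i * (\<Sum>j<Suc N - 1 - i. b j))" by simp
  finally show ?case .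
qed

lemma conv_le:
  fixes a b :: "nat \<Rightarrow> real"
  assumes "\<And>i. a i \<ge> 0" "\<And>i. b i \<ge> 0"
  shows "(\<Sum>n<N. \<Sum>i<n. a i * b (n - 1 - i)) \<le> (\<Sum>i<N. a i) * (\<Sum>j<N. b j)"
proof -
  have "(\<Sum>n<N. \<Sum>i<n. a i * b (n - 1 - i)) = (\<Sum>i<N. a i * (\<Sum>j<N - 1 - i. b j))" by (rule conv_eq)
  also have "\<dots> \<le> (\<Sum>i<N. a i * (\<Sum>j<N. b j))"
    by (intro sum_mono mult_left_mono sum_mono2) (use assms in auto)
  also have "\<dots> = (\<Sum>i<N. a i) * (\<Sum>j<N. b j)" by (simp add: sum_distrib_right)
  finally show ?thesis .
qed

lemma tau_seq_append: "tau_seq f (xs @ ys) = tau_seq f ys \<circ> tau_seq f xs"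
  by (induction xs) (auto simp: comp_assoc)

lemma tau_seq_snoc: "tau_seq f (w @ [l]) x = f l (tau_seq f w x)"
  by (simp add: tau_seq_append)

context ifs
begin

definition aa :: "nat \<Rightarrow> real" where "aa j = s ^ (j div M)"

definition bb :: "nat \<Rightarrow> real" where "bb n = bseq (r * t) aa n"

lemma M0: "M > 0" using M1 by simp

lemma aa_nonneg: "aa j \<ge> 0" unfolding aa_def using s0 by simp

lemma aa_le1: "aa j \<le> 1" unfolding aa_def using s0 s1 by (simp add: power_le_one)

lemma bb_nonneg: "bb n \<ge> 0"
  unfolding bb_def by (rule bseq_nonneg) (use r0 t0 aa_nonneg in auto)

lemma bb_eq: "bb n = aa n + r * t * (\<Sum>i<n. aa i * bb (n - 1 - i))"
  unfolding bb_def by (subst bseq.simps) simp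

lemma tau_seq_1: "dist (tau_seq \<tau> w x) (tau_seq \<tau> w y) \<le> dist x y"
proof (induction w arbitrary: x y)
  case Nil
  then show ?case by simp
next
  case (Cons l w)
  have "dist (tau_seq \<tau> w (\<tau> l x)) (tau_seq \<tau> w (\<tau> l y)) \<le> dist (\<tau> l x) (\<tau> l y)" by (rule Cons.IH)
  also have "\<dots> \<le> dist x y" by (rule tau_dist)
  finally show ?case by simp
qed

lemma tau_seq_dist: "dist (tau_seq \<tau> w x) (tau_seq \<tau> w y) \<le> aa (length w) * dist x y"
proof (induction "length w" arbitrary: w x y rule: less_induct)
  case less
  show ?case
  proof (cases "length w < M")
    case True
    then have "aa (length w) = 1" unfolding aa_def by simp
    then show ?thesis using tau_seq_1 by simp
  next
    case False
    define w1 where "w1 = take M w"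
    define w2 where "w2 = drop M w"
    have w: "w = w1 @ w2" unfolding w1_def w2_def by simp
    have l1: "length w1 = M" using False unfolding w1_def by simp
    have l2: "length w2 < length w" using False M0 unfolding w2_def by simp
    have e: "tau_seq \<tau> w z = tau_seq \<tau> w2 (tau_seq \<tau> w1 z)" for z
      by (simp add: w tau_seq_append)
    have "dist (tau_seq \<tau> w x) (tau_seq \<tau> w y) \<le> aa (length w2) * dist (tau_seq \<tau> w1 x) (tau_seq \<tau> w1 y)"
      unfolding e by (rule less(1)[OF l2])
    also have "\<dots> \<le> aa (length w2) * (s * dist x y)"
      using lipschitz_onD[OF CPM[OF l1], of x y] aa_nonneg by (intro mult_left_mono) auto
    also have "aa (length w2) * (s * dist x y) = aa (length w) * dist x y"
    proof -
      have "length w2 = length w - M" unfolding w2_def by simp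
      moreover have "length w div M = Suc ((length w - M) div M)"
        using le_div_geq[OF M0] False by simp
      ultimately show ?thesis unfolding aa_def by simp
    qed
    finally show ?thesis .
  qed
qed

lemma est:
  assumes f: "L-lipschitz_on UNIV f"
  shows "length w = j \<Longrightarrow> (B ^^ n) f (tau_seq \<tau> w x) - (B ^^ n) f (tau_seq \<tau> w y)
      \<le> L * (aa (j + n) + r * t * (\<Sum>i<n. aa (j + i) * bb (n - 1 - i))) * dist x y"
proof (induction n arbitrary: j w x y)
  case 0
  have L: "L \<ge> 0" using f lipschitz_on_nonneg by blast
  have "dist (f (tau_seq \<tau> w x)) (f (tau_seq \<tau> w y)) \<le> L * dist (tau_seq \<tau> w x) (tau_seq \<tau> w y)"
    by (rule lipschitz_onD[OF f]) simp_all
  then have "f (tau_seq \<tau> w x) - f (tau_seq \<tau> w y) \<le> L * dist (tau_seq \<tau> w x) (tau_seq \<tau> w y)"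
    unfolding dist_real_def by (rule abs_le_D1)
  also have "\<dots> \<le> L * (aa j * dist x y)" using tau_seq_dist 0 L by (intro mult_left_mono) auto
  finally show ?case by (simp add: mult.assoc)
next
  case (Suc n)
  have L: "L \<ge> 0" using f lipschitz_on_nonneg by blast
  define h where "h = (B ^^ n) f"
  have hle: "h x - h y \<le> L * bb n * dist x y" for x y
    using Suc.IH[of "[]" 0 x y] bb_eq[of n] unfolding h_def by simp
  have hlip: "(L * bb n)-lipschitz_on UNIV h"
  proof (rule lipschitz_onI)
    show "0 \<le> L * bb n" using L bb_nonneg by simp
    fix x y
    show "dist (h x) (h y) \<le> L * bb n * dist x y"
      using hle[of x y] hle[of y x] unfolding dist_real_def by (simp add: dist_commute abs_le_iff)
  qed
  define c where "c = L * (aa (Suc j + n) + r * t * (\<Sum>i<n. aa (Suc j + i) * bb (n - 1 - i))) * dist x y"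
  have step: "h (\<tau> l (tau_seq \<tau> w x)) - h (\<tau> l (tau_seq \<tau> w y)) \<le> c" for l
    using Suc.IH[of "w @ [l]" "Suc j" x y] Suc.prems unfolding h_def c_def by (simp add: tau_seq_snoc)
  have "B h (tau_seq \<tau> w x) - B h (tau_seq \<tau> w y) \<le> c + L * bb n * r * t * dist (tau_seq \<tau> w x) (tau_seq \<tau> w y)"
    by (rule one_step[OF hlip step])
  also have "L * bb n * r * t * dist (tau_seq \<tau> w x) (tau_seq \<tau> w y) \<le> L * bb n * r * t * (aa j * dist x y)"
    using tau_seq_dist[of w x y] Suc.prems L bb_nonneg[of n] r0 t0 by (intro mult_left_mono) auto
  finally have 1: "B h (tau_seq \<tau> w x) - B h (tau_seq \<tau> w y) \<le> c + L * bb n * r * t * (aa j * dist x y)"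
    by simp
  have sumeq: "(\<Sum>i<Suc n. aa (j + i) * bb (Suc n - 1 - i)) = aa j * bb n + (\<Sum>i<n. aa (Suc j + i) * bb (n - 1 - i))"
    unfolding sum.lessThan_Suc_shift by (simp add: diff_diff_left)
  have "c + L * bb n * r * t * (aa j * dist x y) =
        L * (aa (j + Suc n) + r * t * (\<Sum>i<Suc n. aa (j + i) * bb (Suc n - 1 - i))) * dist x y"
    unfolding sumeq c_def by (simp add: algebra_simps)
  with 1 show ?case unfolding h_def by simp
qed

lemma Bn_lip:
  assumes f: "L-lipschitz_on UNIV f"
  shows "(L * bb n)-lipschitz_on UNIV ((B ^^ n) f)"
proof (rule lipschitz_onI)
  have L: "L \<ge> 0" using f lipschitz_on_nonneg by blast
  then show "0 \<le> L * bb n" using bb_nonneg by simp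
  have hle: "(B ^^ n) f x - (B ^^ n) f y \<le> L * bb n * dist x y" for x y
    using est[OF f, of "[]" 0 n x y] bb_eq[of n] by simp
  fix x y
  show "dist ((B ^^ n) f x) ((B ^^ n) f y) \<le> L * bb n * dist x y"
    using hle[of x y] hle[of y x] unfolding dist_real_def by (simp add: dist_commute abs_le_iff)
qed

definition AA :: real where "AA = real M / (1 - s)"

lemma sum_aa_blocks: "(\<Sum>i<M * Kb. aa i) = real M * (\<Sum>k<Kb. s ^ k)"
proof (induction Kb)
  case 0
  then show ?case by simp
next
  case (Suc Kb)
  have "(\<Sum>i<M * Suc Kb. aa i) = (\<Sum>i<M * Kb. aa i) + (\<Sum>i<M. aa (M * Kb + i))"
    using sum_split_add[where m="M * Kb" and k=M and f=aa] by (simp add: add.commute)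
  also have "(\<Sum>i<M. aa (M * Kb + i)) = (\<Sum>i<M. s ^ Kb)"
  proof (rule sum.cong[OF refl])
    fix i assume "i \<in> {..<M}"
    then have "(M * Kb + i) div M = Kb" using M0 by simp
    then show "aa (M * Kb + i) = s ^ Kb" unfolding aa_def by simp
  qed
  finally show ?case using Suc by (simp add: algebra_simps)
qed

lemma sum_aa: "(\<Sum>i<N. aa i) \<le> AA"
proof -
  have "(\<Sum>i<N. aa i) \<le> (\<Sum>i<M * N. aa i)"
    by (rule sum_mono2) (use M0 aa_nonneg in auto)
  also have "\<dots> = real M * (\<Sum>k<N. s ^ k)" by (rule sum_aa_blocks)
  also have "\<dots> \<le> real M * (1 / (1 - s))"
  proof (rule mult_left_mono)
    have "(\<Sum>k<N. s ^ k) = (1 - s ^ N) / (1 - s)" using s1 by (simp add: sum_gp_strict)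
    also have "\<dots> \<le> 1 / (1 - s)" using s0 s1 by (intro divide_right_mono) auto
    finally show "(\<Sum>k<N. s ^ k) \<le> 1 / (1 - s)" .
  qed simp
  finally show ?thesis unfolding AA_def by simp
qed

lemma cAA: "r * t * AA < 1"
proof -
  have "r * t * real M < 1 - s" using small by (simp add: algebra_simps)
  then have "r * t * real M / (1 - s) < 1" using s1 by simp
  then show ?thesis unfolding AA_def by simp
qed

lemma sum_bb: "(\<Sum>n<N. bb n) \<le> AA / (1 - r * t * AA)"
proof -
  define S where "S = (\<Sum>n<N. bb n)"
  have S0: "S \<ge> 0" unfolding S_def by (intro sum_nonneg bb_nonneg)
  have "S = (\<Sum>n<N. aa n + r * t * (\<Sum>i<n. aa i * bb (n - 1 - i)))"
    unfolding S_def by (rule sum.cong[OF refl]) (rule bb_eq)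
  also have "\<dots> = (\<Sum>n<N. aa n) + r * t * (\<Sum>n<N. \<Sum>i<n. aa i * bb (n - 1 - i))"
    by (simp add: sum.distrib sum_distrib_left)
  also have "\<dots> \<le> AA + r * t * (AA * S)"
  proof (rule add_mono[OF sum_aa], rule mult_left_mono)
    have "(\<Sum>n<N. \<Sum>i<n. aa i * bb (n - 1 - i)) \<le> (\<Sum>i<N. aa i) * S"
      unfolding S_def by (rule conv_le) (use aa_nonneg bb_nonneg in auto)
    also have "\<dots> \<le> AA * S" using sum_aa S0 by (intro mult_right_mono) auto
    finally show "(\<Sum>n<N. \<Sum>i<n. aa i * bb (n - 1 - i)) \<le> AA * S" .
    show "0 \<le> r * t" using r0 t0 by simp
  qed
  finally have "S * (1 - r * t * AA) \<le> AA" by (simp add: algebra_simps)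
  then show ?thesis unfolding S_def using cAA by (simp add: pos_le_divide_eq)
qed

lemma bb_tendsto: "bb \<longlonglongrightarrow> 0"
proof -
  have "summable bb"
    by (rule summableI_nonneg_bounded[OF bb_nonneg sum_bb])
  then show ?thesis by (rule summable_LIMSEQ_zero)
qed

end


lemma infdist_le_scaled:
  assumes "Bs \<noteq> {}" "c \<ge> 0" "\<And>b. b \<in> Bs \<Longrightarrow> z \<le> c * dist a b"
  shows "z \<le> c * infdist a Bs"
proof (cases "c = 0")
  case True
  obtain b where "b \<in> Bs" using assms(1) by blast
  then show ?thesis using assms(3)[of b] True by simp
next
  case False
  then have cp: "c > 0" using assms(2) by simp
  have "z / c \<le> infdist a Bs"
    unfolding infdist_notempty[OF assms(1)]
  proof (rule cINF_greatest[OF assms(1)])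
    fix b assume "b \<in> Bs"
    then show "z / c \<le> dist a b" using assms(3)[of b] cp by (simp add: divide_le_eq mult.commute)
  qed
  then show ?thesis using cp by (simp add: divide_le_eq mult.commute)
qed

lemma nest_ne:
  fixes D :: "nat \<Rightarrow> 'a::topological_space set"
  assumes "compact (UNIV::'a::topological_space set)" "\<And>n. closed (D n)" "\<And>n. D n \<noteq> {}"
    "\<And>m n. m \<le> n \<Longrightarrow> D n \<subseteq> D m"
  shows "(\<Inter>n. D n) \<noteq> {}"
proof -
  have "UNIV \<inter> \<Inter> (D ` UNIV) \<noteq> {}"
  proof (rule compact_imp_fip_image[OF assms(1)])
    show "closed (D i)" for i by (rule assms(2))
    fix I' :: "nat set" assume I': "finite I'" "I' \<subseteq> UNIV"
    show "UNIV \<inter> \<Inter> (D ` I') \<noteq> {}"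
    proof (cases "I' = {}")
      case True
      then show ?thesis by simp
    next
      case False
      have "D (Max I') \<subseteq> D i" if "i \<in> I'" for i using assms(4)[OF Max_ge[OF I'(1) that]] .
      then have sub: "D (Max I') \<subseteq> \<Inter> (D ` I')" by (intro INT_greatest)
      obtain x where "x \<in> D (Max I')" using assms(3)[of "Max I'"] by blast
      then have "x \<in> UNIV \<inter> \<Inter> (D ` I')" using sub by blast
      then show ?thesis by blast
    qed
  qed
  then show ?thesis by simp
qed

context ifs
begin

abbreviation F :: "'x set \<Rightarrow> 'x set" where "F \<equiv> fractal_op \<tau>"

lemma F_def: "F A = (\<Union>l. \<tau> l ` A)" unfolding fractal_op_def by simp

lemma F_mono: "A \<subseteq> A' \<Longrightarrow> F A \<subseteq> F A'"
  unfolding F_def by auto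

lemma F_ne: "A \<noteq> {} \<Longrightarrow> F A \<noteq> {}"
  unfolding F_def by auto

lemma F_image: "F A = (\<lambda>p. \<tau> (fst p) (snd p)) ` (UNIV \<times> A)"
proof (intro equalityI subsetI)
  fix y assume "y \<in> F A"
  then obtain l x where lx: "x \<in> A" "y = \<tau> l x" unfolding F_def by blast
  show "y \<in> (\<lambda>p. \<tau> (fst p) (snd p)) ` (UNIV \<times> A)"
    by (rule image_eqI[where x="(l, x)"]) (use lx in auto)
next
  fix y assume "y \<in> (\<lambda>p. \<tau> (fst p) (snd p)) ` (UNIV \<times> A)"
  then obtain p where p: "p \<in> UNIV \<times> A" "y = \<tau> (fst p) (snd p)" by blast
  then show "y \<in> F A" unfolding F_def by (cases p) auto
qed

lemma F_compact: assumes "compact A" shows "compact (F A)"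
  unfolding F_image
  by (rule compact_continuous_image[OF continuous_on_subset[OF tau_cont subset_UNIV] compact_Times[OF cL assms]])

lemma Fn_eq: "(F ^^ n) A = {tau_seq \<tau> w a | w a. length w = n \<and> a \<in> A}"
proof (induction n)
  case 0
  then show ?case by auto
next
  case (Suc n)
  have "(F ^^ Suc n) A = F ((F ^^ n) A)" by simp
  also have "\<dots> = {tau_seq \<tau> w a | w a. length w = Suc n \<and> a \<in> A}"
  proof
    show "F ((F ^^ n) A) \<subseteq> {tau_seq \<tau> w a | w a. length w = Suc n \<and> a \<in> A}"
    proof
      fix y assume "y \<in> F ((F ^^ n) A)"
      then obtain l z where lz: "z \<in> (F ^^ n) A" "y = \<tau> l z" unfolding F_def by blast
      from lz(1) have "z \<in> {tau_seq \<tau> w a | w a. length w = n \<and> a \<in> A}" by (simp only: Suc)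
      then obtain w a where "length w = n" "a \<in> A" "z = tau_seq \<tau> w a" by blast
      then have "length w = n" "a \<in> A" "y = \<tau> l (tau_seq \<tau> w a)" using lz(2) by simp_all
      then have "y = tau_seq \<tau> (w @ [l]) a \<and> length (w @ [l]) = Suc n \<and> a \<in> A"
        by (simp add: tau_seq_snoc)
      then show "y \<in> {tau_seq \<tau> w a | w a. length w = Suc n \<and> a \<in> A}" by blast
    qed
    show "{tau_seq \<tau> w a | w a. length w = Suc n \<and> a \<in> A} \<subseteq> F ((F ^^ n) A)"
    proof
      fix y assume "y \<in> {tau_seq \<tau> w a | w a. length w = Suc n \<and> a \<in> A}"
      then obtain w a where w: "length w = Suc n" "a \<in> A" "y = tau_seq \<tau> w a" by blast
      then obtain w' l where "w = w' @ [l]" by (metis length_Suc_conv_rev)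
      then have "y = \<tau> l (tau_seq \<tau> w' a)" "length w' = n" using w by (auto simp: tau_seq_snoc)
      moreover have "tau_seq \<tau> w' a \<in> (F ^^ n) A"
      proof -
        have "tau_seq \<tau> w' a \<in> {tau_seq \<tau> w a | w a. length w = n \<and> a \<in> A}"
          using w(2) \<open>length w' = n\<close> by blast
        then show ?thesis by (simp only: Suc)
      qed
      ultimately show "y \<in> F ((F ^^ n) A)" unfolding F_def by blast
    qed
  qed
  finally show ?case .
qed

lemma Fn_ne: "A \<noteq> {} \<Longrightarrow> (F ^^ n) A \<noteq> {}"
  by (induction n) (simp_all add: F_ne)

lemma Fn_compact: "compact A \<Longrightarrow> compact ((F ^^ n) A)"
  by (induction n) (auto intro: F_compact)

lemma Fn_mono: "A \<subseteq> A' \<Longrightarrow> (F ^^ n) A \<subseteq> (F ^^ n) A'"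
  by (induction n) (simp_all add: F_mono)

definition Dm :: real where "Dm = (SOME D. D \<ge> 0 \<and> (\<forall>x y::'x. dist x y \<le> D))"

lemma Dm: "Dm \<ge> 0" "dist (x::'x) y \<le> Dm"
proof -
  have "\<exists>D. D \<ge> 0 \<and> (\<forall>x y::'x. dist x y \<le> D)" using compact_diam[OF cX] by blast
  then have "Dm \<ge> 0 \<and> (\<forall>x y::'x. dist x y \<le> Dm)" unfolding Dm_def by (rule someI_ex)
  then show "Dm \<ge> 0" "dist x y \<le> Dm" by auto
qed

lemma infdist_Dm: "infdist (x::'x) A \<le> Dm"
proof (cases "A = {}")
  case True
  then show ?thesis using Dm by (simp add: infdist_def)
next
  case False
  then obtain a where "a \<in> A" by blast
  then show ?thesis using infdist_le[of a A x] Dm(2)[of x a] by simp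
qed

lemma hd_ge1: "a \<in> (A::'x set) \<Longrightarrow> infdist a Bs \<le> hausdorff_dist A Bs"
proof -
  assume a: "a \<in> A"
  have "infdist a Bs \<le> (SUP a\<in>A. infdist a Bs)"
    by (rule cSUP_upper[OF a]) (rule bdd_aboveI2, rule infdist_Dm)
  then show ?thesis unfolding hausdorff_dist_def by simp
qed

lemma hd_ge2: "b \<in> (Bs::'x set) \<Longrightarrow> infdist b A \<le> hausdorff_dist A Bs"
proof -
  assume b: "b \<in> Bs"
  have "infdist b A \<le> (SUP b\<in>Bs. infdist b A)"
    by (rule cSUP_upper[OF b]) (rule bdd_aboveI2, rule infdist_Dm)
  then show ?thesis unfolding hausdorff_dist_def by simp
qed

lemma hd_nonneg: "(A::'x set) \<noteq> {} \<Longrightarrow> hausdorff_dist A Bs \<ge> 0"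
proof -
  assume "A \<noteq> {}"
  then obtain a where a: "a \<in> A" by blast
  show ?thesis using hd_ge1[OF a, of Bs] infdist_nonneg[of a Bs] by linarith
qed

lemma hd_le:
  fixes A Bs :: "'x set"
  assumes "A \<noteq> {}" "Bs \<noteq> {}" "\<And>a. a \<in> A \<Longrightarrow> infdist a Bs \<le> c" "\<And>b. b \<in> Bs \<Longrightarrow> infdist b A \<le> c"
  shows "hausdorff_dist A Bs \<le> c"
  unfolding hausdorff_dist_def
  by (intro max.boundedI cSUP_least) (use assms in auto)

lemma hd_contract:
  fixes A Bs :: "'x set" and g :: "'w \<Rightarrow> 'x \<Rightarrow> 'x"
  assumes A: "A \<noteq> {}" and Bs: "Bs \<noteq> {}" and W: "W \<noteq> {}" and c: "c \<ge> 0"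
    and g: "\<And>w x y. w \<in> W \<Longrightarrow> dist (g w x) (g w y) \<le> c * dist x y"
  shows "hausdorff_dist {g w a | w a. w \<in> W \<and> a \<in> A} {g w b | w b. w \<in> W \<and> b \<in> Bs} \<le> c * hausdorff_dist A Bs"
proof -
  define GA where "GA = {g w a | w a. w \<in> W \<and> a \<in> A}"
  define GB where "GB = {g w b | w b. w \<in> W \<and> b \<in> Bs}"
  have key: "infdist y GY \<le> c * hausdorff_dist X Y"
    if X: "X \<noteq> {}" and Y: "Y \<noteq> {}" and GY: "GY = {g w b | w b. w \<in> W \<and> b \<in> Y}"
      and y: "y = g w a" "w \<in> W" "a \<in> X"
      and hd: "\<And>a. a \<in> X \<Longrightarrow> infdist a Y \<le> hausdorff_dist X Y"
    for X Y GY y w a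
  proof -
    have "infdist y GY \<le> c * infdist a Y"
    proof (rule infdist_le_scaled[OF Y c])
      fix b assume "b \<in> Y"
      then have "g w b \<in> GY" using GY y(2) by blast
      then have "infdist y GY \<le> dist y (g w b)" by (rule infdist_le)
      also have "\<dots> \<le> c * dist a b" using g[OF y(2)] y(1) by simp
      finally show "infdist y GY \<le> c * dist a b" .
    qed
    also have "\<dots> \<le> c * hausdorff_dist X Y" using hd[OF y(3)] c by (rule mult_left_mono)
    finally show ?thesis .
  qed
  have GAne: "GA \<noteq> {}" and GBne: "GB \<noteq> {}" using A Bs W unfolding GA_def GB_def by blast+
  have "hausdorff_dist GA GB \<le> c * hausdorff_dist A Bs"
  proof (rule hd_le[OF GAne GBne])
    fix y assume "y \<in> GA"
    then obtain w a where "y = g w a" "w \<in> W" "a \<in> A" unfolding GA_def by blast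
    then show "infdist y GB \<le> c * hausdorff_dist A Bs"
      by (intro key[OF A Bs GB_def] hd_ge1)
  next
    fix y assume "y \<in> GB"
    then obtain w b where yb: "y = g w b" "w \<in> W" "b \<in> Bs" unfolding GB_def by blast
    have "infdist y GA \<le> c * hausdorff_dist Bs A"
      by (intro key[OF Bs A GA_def yb] hd_ge1)
    moreover have "hausdorff_dist Bs A = hausdorff_dist A Bs" unfolding hausdorff_dist_def by simp
    ultimately show "infdist y GA \<le> c * hausdorff_dist A Bs" by simp
  qed
  then show ?thesis unfolding GA_def GB_def .
qed

lemma hd_Fn:
  fixes A Bs :: "'x set"
  assumes "A \<noteq> {}" "Bs \<noteq> {}"
  shows "hausdorff_dist ((F ^^ n) A) ((F ^^ n) Bs) \<le> aa n * hausdorff_dist A Bs"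
proof -
  have "hausdorff_dist {tau_seq \<tau> w a | w a. w \<in> {w. length w = n} \<and> a \<in> A}
                       {tau_seq \<tau> w b | w b. w \<in> {w. length w = n} \<and> b \<in> Bs} \<le> aa n * hausdorff_dist A Bs"
  proof (rule hd_contract[OF assms])
    show "{w::'l list. length w = n} \<noteq> {}" by (auto intro: exI[of _ "replicate n undefined"])
    show "aa n \<ge> 0" by (rule aa_nonneg)
    fix w :: "'l list" and x y assume "w \<in> {w. length w = n}"
    then show "dist (tau_seq \<tau> w x) (tau_seq \<tau> w y) \<le> aa n * dist x y"
      using tau_seq_dist[of w x y] by simp
  qed
  then show ?thesis unfolding Fn_eq by simp
qed

lemma hd_zero_sub:
  fixes A Bs :: "'x set"
  assumes "closed Bs" "Bs \<noteq> {}" "A \<noteq> {}" "hausdorff_dist A Bs \<le> 0"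
  shows "A \<subseteq> Bs"
proof
  fix a assume "a \<in> A"
  then have "infdist a Bs \<le> 0" using hd_ge1[of a A Bs] assms(4) by linarith
  then have "infdist a Bs = 0" using infdist_nonneg[of a Bs] by simp
  then show "a \<in> Bs" using in_closed_iff_infdist_zero[OF assms(1,2)] by simp
qed

lemma aa_tendsto: "aa \<longlonglongrightarrow> 0"
proof -
  have "summable aa" by (rule summableI_nonneg_bounded[OF aa_nonneg sum_aa])
  then show ?thesis by (rule summable_LIMSEQ_zero)
qed

subsection \<open>The attractor\<close>

definition Att :: "'x set" where "Att = (\<Inter>k. (F ^^ k) UNIV)"

lemma Dk_compact: "compact ((F ^^ k) UNIV)" by (rule Fn_compact[OF cX])

lemma Dk_ne: "(F ^^ k) UNIV \<noteq> {}" by (rule Fn_ne) simp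

lemma Dk_dec: "m \<le> n \<Longrightarrow> (F ^^ n) UNIV \<subseteq> (F ^^ m) UNIV"
proof (induction n rule: dec_induct)
  case base
  then show ?case by simp
next
  case (step n)
  have "(F ^^ Suc n) UNIV = (F ^^ n) (F UNIV)" by (simp only: funpow_Suc_right comp_def)
  also have "\<dots> \<subseteq> (F ^^ n) UNIV" by (rule Fn_mono) simp
  finally show ?case using step by simp
qed

lemma Att_ne: "Att \<noteq> {}"
  unfolding Att_def by (rule nest_ne[OF cX]) (simp_all add: compact_imp_closed[OF Dk_compact] Dk_ne Dk_dec)

lemma Att_closed: "closed Att"
  unfolding Att_def by (rule closed_INT) (simp add: compact_imp_closed[OF Dk_compact])

lemma Att_compact: "compact Att"
  using compact_Int_closed[OF cX Att_closed] by simp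

lemma Att_inv: "F Att = Att"
proof
  show "F Att \<subseteq> Att"
  proof -
    have "F Att \<subseteq> (F ^^ k) UNIV" for k
    proof (cases k)
      case 0
      then show ?thesis by simp
    next
      case (Suc m)
      have "F Att \<subseteq> F ((F ^^ m) UNIV)" by (rule F_mono) (auto simp: Att_def)
      then show ?thesis using Suc by simp
    qed
    then show ?thesis unfolding Att_def by blast
  qed
  show "Att \<subseteq> F Att"
  proof
    fix y assume y: "y \<in> Att"
    define E where "E k = (UNIV \<times> (F ^^ k) UNIV) \<inter> (\<lambda>p. \<tau> (fst p) (snd p)) -` {y}" for k
    have Ec: "compact (E k)" for k
    proof -
      have "closed ((\<lambda>p::'l \<times> 'x. \<tau> (fst p) (snd p)) -` {y})"
        by (rule closed_vimage[OF closed_singleton tau_cont])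
      moreover have "compact (UNIV \<times> (F ^^ k) UNIV :: ('l \<times> 'x) set)"
        by (rule compact_Times[OF cL Dk_compact])
      ultimately show ?thesis unfolding E_def by (rule compact_Int_closed[rotated])
    qed
    have Ene: "E k \<noteq> {}" for k
    proof -
      have "y \<in> (F ^^ Suc k) UNIV" using y unfolding Att_def by blast
      then have "y \<in> F ((F ^^ k) UNIV)" by simp
      then obtain l x where "x \<in> (F ^^ k) UNIV" "y = \<tau> l x" unfolding F_def by blast
      then have "(l, x) \<in> E k" unfolding E_def by simp
      then show ?thesis by blast
    qed
    have Edec: "E n \<subseteq> E m" if "m \<le> n" for m n
    proof -
      have "(F ^^ n) UNIV \<subseteq> (F ^^ m) UNIV" by (rule Dk_dec[OF that])
      then show ?thesis unfolding E_def by (intro Int_mono Sigma_mono) auto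
    qed
    have cP: "compact (UNIV :: ('l \<times> 'x) set)" using compact_Times[OF cL cX] by simp
    have "(\<Inter>k. E k) \<noteq> {}"
    proof (rule nest_ne[OF cP])
      show "closed (E n)" for n by (rule compact_imp_closed[OF Ec])
      show "E n \<noteq> {}" for n by (rule Ene)
      show "m \<le> n \<Longrightarrow> E n \<subseteq> E m" for m n by (rule Edec)
    qed
    then obtain p where p: "p \<in> (\<Inter>k. E k)" by blast
    have pk: "p \<in> E k" for k using p by blast
    have "snd p \<in> (F ^^ k) UNIV" for k using pk[of k] unfolding E_def by (cases p) simp
    then have sA: "snd p \<in> Att" unfolding Att_def by (intro InterI) auto
    have ty: "\<tau> (fst p) (snd p) = y" using pk[of 0] unfolding E_def by (cases p) simp
    show "y \<in> F Att" unfolding F_def using sA ty by blast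
  qed
qed

lemma Fn_Att: "(F ^^ n) Att = Att"
  by (induction n) (simp_all add: Att_inv)

lemma hd_conv:
  assumes "Bs \<noteq> {}"
  shows "(\<lambda>k. hausdorff_dist ((F ^^ k) Bs) Att) \<longlonglongrightarrow> 0"
proof (rule real_tendsto_sandwich[where f="\<lambda>_. 0" and h="\<lambda>k. aa k * hausdorff_dist Bs Att"])
  show "\<forall>\<^sub>F k in sequentially. 0 \<le> hausdorff_dist ((F ^^ k) Bs) Att"
    using hd_nonneg Fn_ne[OF assms] by (intro always_eventually allI) blast
  show "\<forall>\<^sub>F k in sequentially. hausdorff_dist ((F ^^ k) Bs) Att \<le> aa k * hausdorff_dist Bs Att"
    using hd_Fn[OF assms Att_ne] Fn_Att by (intro always_eventually allI) simp
  show "(\<lambda>_. 0) \<longlonglongrightarrow> (0::real)" by simp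
  show "(\<lambda>k. aa k * hausdorff_dist Bs Att) \<longlonglongrightarrow> 0"
    using tendsto_mult_left_zero[OF aa_tendsto] by simp
qed

lemma Att_unique:
  assumes "A \<noteq> {}" "compact A" "F A = A"
  shows "A = Att"
proof -
  have FA: "(F ^^ n) A = A" for n by (induction n) (simp_all add: assms(3))
  have h: "hausdorff_dist A Att \<le> s * hausdorff_dist A Att"
    using hd_Fn[OF assms(1) Att_ne, of M] FA Fn_Att M0 unfolding aa_def by simp
  have h0: "hausdorff_dist A Att \<ge> 0" using hd_nonneg[OF assms(1)] .
  have "hausdorff_dist A Att \<le> 0"
  proof (rule ccontr)
    assume "\<not> ?thesis"
    then have "hausdorff_dist A Att > 0" by simp
    then have "s * hausdorff_dist A Att < hausdorff_dist A Att" using s1 by simp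
    then show False using h by simp
  qed
  moreover have "hausdorff_dist Att A = hausdorff_dist A Att" unfolding hausdorff_dist_def by simp
  ultimately show ?thesis
    using hd_zero_sub[OF Att_closed Att_ne assms(1)] hd_zero_sub[OF compact_imp_closed[OF assms(2)] assms(1) Att_ne]
    by auto
qed

end


context ifs
begin

lemma T_contract:
  assumes "\<mu> \<in> Prob" "\<nu> \<in> Prob"
  shows "dMK ((T ^^ n) \<mu>) ((T ^^ n) \<nu>) \<le> bb n * dMK \<mu> \<nu>"
proof (rule dMK_le)
  fix f :: "'x \<Rightarrow> real" assume f: "1-lipschitz_on UNIV f"
  have lf: "lipf f" by (rule lipfI[OF f])
  have "integral\<^sup>L ((T ^^ n) \<mu>) f - integral\<^sup>L ((T ^^ n) \<nu>) f = integral\<^sup>L \<mu> ((B ^^ n) f) - integral\<^sup>L \<nu> ((B ^^ n) f)"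
    using Tn_int[OF assms(1) lf] Tn_int[OF assms(2) lf] by simp
  also have "\<dots> \<le> (1 * bb n) * dMK \<mu> \<nu>" by (rule dMK_lip[OF cX assms Bn_lip[OF f]])
  finally show "integral\<^sup>L ((T ^^ n) \<mu>) f - integral\<^sup>L ((T ^^ n) \<nu>) f \<le> bb n * dMK \<mu> \<nu>" by simp
qed

lemma lip_int_abs:
  fixes \<mu> \<nu> :: "'x measure"
  assumes g: "L-lipschitz_on UNIV g" and P: "\<mu> \<in> Prob" "\<nu> \<in> Prob"
  shows "\<bar>integral\<^sup>L \<mu> g - integral\<^sup>L \<nu> g\<bar> \<le> L * (2 * Dm)"
proof -
  have L: "L \<ge> 0" using g lipschitz_on_nonneg by blast
  have b1: "dMK \<mu> \<nu> \<le> 2 * Dm" by (rule dMK_bound[OF cX P]) (rule Dm(2))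
  have b2: "dMK \<nu> \<mu> \<le> 2 * Dm" by (rule dMK_bound[OF cX P(2,1)]) (rule Dm(2))
  have "integral\<^sup>L \<mu> g - integral\<^sup>L \<nu> g \<le> L * dMK \<mu> \<nu>" by (rule dMK_lip[OF cX P g])
  also have "\<dots> \<le> L * (2 * Dm)" using b1 L by (rule mult_left_mono)
  finally have 1: "integral\<^sup>L \<mu> g - integral\<^sup>L \<nu> g \<le> L * (2 * Dm)" .
  have "integral\<^sup>L \<nu> g - integral\<^sup>L \<mu> g \<le> L * dMK \<nu> \<mu>" by (rule dMK_lip[OF cX P(2,1) g])
  also have "\<dots> \<le> L * (2 * Dm)" using b2 L by (rule mult_left_mono)
  finally have 2: "integral\<^sup>L \<nu> g - integral\<^sup>L \<mu> g \<le> L * (2 * Dm)" .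
  show ?thesis using 1 2 by (simp add: abs_le_iff)
qed

definition a0 :: 'x where "a0 = (SOME a. a \<in> Att)"

lemma a0_Att: "a0 \<in> Att"
  unfolding a0_def using Att_ne by (simp add: some_in_eq)

definition dl :: "'x measure" where "dl = return borel a0"

lemma dl_Prob: "dl \<in> Prob"
  unfolding dl_def Prob_def by (simp add: prob_space_return)

definition mus :: "nat \<Rightarrow> 'x measure" where "mus n = (T ^^ n) dl"

lemma mus_Prob: "mus n \<in> Prob"
  unfolding mus_def by (rule Tn_Prob[OF dl_Prob])

lemma mus_Suc: "mus (Suc n) = T (mus n)"
  unfolding mus_def by simp

lemma mus_conv: assumes "lipf f" shows "convergent (\<lambda>n. integral\<^sup>L (mus n) f)"
proof -
  obtain L where L: "L \<ge> 0" "L-lipschitz_on UNIV f" using lipf_lipschitz[OF assms] by blast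
  have key: "\<bar>integral\<^sup>L (mus (n + k)) f - integral\<^sup>L (mus n) f\<bar> \<le> L * bb n * (2 * Dm)" for n k
  proof -
    have e1: "mus (n + k) = (T ^^ n) (mus k)" unfolding mus_def by (simp add: funpow_add)
    have "integral\<^sup>L (mus (n + k)) f = integral\<^sup>L (mus k) ((B ^^ n) f)"
      unfolding e1 by (rule Tn_int[OF mus_Prob assms])
    moreover have "integral\<^sup>L (mus n) f = integral\<^sup>L dl ((B ^^ n) f)"
      unfolding mus_def by (rule Tn_int[OF dl_Prob assms])
    ultimately show ?thesis
      using lip_int_abs[OF Bn_lip[OF L(2), of n] mus_Prob[of k] dl_Prob] by simp
  qed
  have "Cauchy (\<lambda>n. integral\<^sup>L (mus n) f)"
  proof (rule metric_CauchyI)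
    fix e :: real assume e: "e > 0"
    define C where "C = L * (2 * Dm) + 1"
    have LD: "L * (2 * Dm) \<ge> 0" using L Dm(1) by simp
    have C: "C > 0" "L * (2 * Dm) < C" using LD unfolding C_def by linarith+
    have "eventually (\<lambda>n. bb n < e / C) sequentially"
      using order_tendstoD(2)[OF bb_tendsto, of "e / C"] e C by simp
    then obtain N where N: "\<And>n. n \<ge> N \<Longrightarrow> bb n < e / C" unfolding eventually_sequentially by blast
    have small_n: "L * bb n * (2 * Dm) < e" if "n \<ge> N" for n
    proof -
      have "L * bb n * (2 * Dm) = (L * (2 * Dm)) * bb n" by simp
      also have "\<dots> \<le> C * bb n" using C bb_nonneg[of n] by (intro mult_right_mono) auto
      also have "\<dots> < C * (e / C)" by (rule mult_strict_left_mono[OF N[OF that] C(1)])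
      also have "\<dots> = e" using C by simp
      finally show ?thesis .
    qed
    show "\<exists>M. \<forall>m\<ge>M. \<forall>n\<ge>M. dist (integral\<^sup>L (mus m) f) (integral\<^sup>L (mus n) f) < e"
    proof (intro exI allI impI)
      fix m n assume mn: "N \<le> m" "N \<le> n"
      show "dist (integral\<^sup>L (mus m) f) (integral\<^sup>L (mus n) f) < e"
      proof (cases "m \<le> n")
        case True
        then obtain k where "n = m + k" using le_Suc_ex by blast
        then show ?thesis using key[of m k] small_n[OF mn(1)] by (simp add: dist_real_def abs_minus_commute)
      next
        case False
        then obtain k where "m = n + k" using le_Suc_ex[of n m] by auto
        then show ?thesis using key[of n k] small_n[OF mn(2)] by (simp add: dist_real_def)
      qed
    qed
  qed
  then show ?thesis by (simp add: Cauchy_convergent_iff)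
qed

lemma exists_limit: "\<exists>\<mu>\<in>Prob. \<forall>f. lipf f \<longrightarrow> (\<lambda>n. integral\<^sup>L (mus n) f) \<longlonglongrightarrow> integral\<^sup>L \<mu> f"
  by (rule limit_measure_exists[OF cX mus_Prob mus_conv])

definition mu0 :: "'x measure" where
  "mu0 = (SOME \<mu>. \<mu> \<in> Prob \<and> (\<forall>f. lipf f \<longrightarrow> (\<lambda>n. integral\<^sup>L (mus n) f) \<longlonglongrightarrow> integral\<^sup>L \<mu> f))"

lemma mu0: "mu0 \<in> Prob" "\<And>f. lipf f \<Longrightarrow> (\<lambda>n. integral\<^sup>L (mus n) f) \<longlonglongrightarrow> integral\<^sup>L mu0 f"
proof -
  have "mu0 \<in> Prob \<and> (\<forall>f. lipf f \<longrightarrow> (\<lambda>n. integral\<^sup>L (mus n) f) \<longlonglongrightarrow> integral\<^sup>L mu0 f)"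
  proof -
    have "\<exists>\<mu>. \<mu> \<in> Prob \<and> (\<forall>f. lipf f \<longrightarrow> (\<lambda>n. integral\<^sup>L (mus n) f) \<longlonglongrightarrow> integral\<^sup>L \<mu> f)"
      using exists_limit unfolding Bex_def .
    then show ?thesis unfolding mu0_def by (rule someI_ex)
  qed
  then show "mu0 \<in> Prob" "\<And>f. lipf f \<Longrightarrow> (\<lambda>n. integral\<^sup>L (mus n) f) \<longlonglongrightarrow> integral\<^sup>L mu0 f" by auto
qed

lemma mu0_fixed: "T mu0 = mu0"
proof (rule Prob_eqI_lip[OF cX T_Prob[OF mu0(1)] mu0(1)])
  fix f :: "'x \<Rightarrow> real" assume lf: "lipf f"
  have 1: "integral\<^sup>L (T mu0) f = integral\<^sup>L mu0 (B f)" by (rule T_int[OF mu0(1) lipf_cont[OF lf]])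
  have 2: "(\<lambda>n. integral\<^sup>L (mus n) (B f)) \<longlonglongrightarrow> integral\<^sup>L mu0 (B f)" by (rule mu0(2)[OF B_lipf[OF lf]])
  have "integral\<^sup>L (mus n) (B f) = integral\<^sup>L (mus (Suc n)) f" for n
    unfolding mus_Suc by (rule T_int[OF mus_Prob lipf_cont[OF lf], symmetric])
  then have "(\<lambda>n. integral\<^sup>L (mus (Suc n)) f) \<longlonglongrightarrow> integral\<^sup>L mu0 (B f)" using 2 by simp
  moreover have "(\<lambda>n. integral\<^sup>L (mus (Suc n)) f) \<longlonglongrightarrow> integral\<^sup>L mu0 f"
    using LIMSEQ_Suc[OF mu0(2)[OF lf]] .
  ultimately have "integral\<^sup>L mu0 (B f) = integral\<^sup>L mu0 f" by (rule LIMSEQ_unique)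
  then show "integral\<^sup>L (T mu0) f = integral\<^sup>L mu0 f" using 1 by simp
qed

lemma mu0_Tn: "(T ^^ n) mu0 = mu0"
  by (induction n) (simp_all add: mu0_fixed)

lemma mu0_conv: assumes "\<nu> \<in> Prob" shows "(\<lambda>k. dMK ((T ^^ k) \<nu>) mu0) \<longlonglongrightarrow> 0"
proof (rule real_tendsto_sandwich[where f="\<lambda>_. 0" and h="\<lambda>k. bb k * dMK \<nu> mu0"])
  show "\<forall>\<^sub>F k in sequentially. 0 \<le> dMK ((T ^^ k) \<nu>) mu0"
    by (intro always_eventually allI dMK_nonneg[OF cX Tn_Prob[OF assms] mu0(1)])
  show "\<forall>\<^sub>F k in sequentially. dMK ((T ^^ k) \<nu>) mu0 \<le> bb k * dMK \<nu> mu0"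
    using T_contract[OF assms mu0(1)] mu0_Tn by (intro always_eventually allI) simp
  show "(\<lambda>_. 0) \<longlonglongrightarrow> (0::real)" by simp
  show "(\<lambda>k. bb k * dMK \<nu> mu0) \<longlonglongrightarrow> 0"
    using tendsto_mult_left_zero[OF bb_tendsto] by simp
qed

lemma mu0_unique: assumes "\<mu>' \<in> Prob" "T \<mu>' = \<mu>'" shows "\<mu>' = mu0"
proof (rule dMK_zero_eq[OF cX assms(1) mu0(1)])
  have Tn: "(T ^^ n) \<mu>' = \<mu>'" for n by (induction n) (simp_all add: assms(2))
  have le: "dMK \<mu>' mu0 \<le> bb k * dMK \<mu>' mu0" for k
    using T_contract[OF assms(1) mu0(1), of k] Tn mu0_Tn by simp
  have "(\<lambda>k. bb k * dMK \<mu>' mu0) \<longlonglongrightarrow> 0"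
    using tendsto_mult_left_zero[OF bb_tendsto] by simp
  then show "dMK \<mu>' mu0 \<le> 0"
    by (rule LIMSEQ_le_const) (use le in auto)
qed

subsection \<open>Support\<close>

lemma Att_borel: "Att \<in> sets borel" using Att_closed by simp

lemma K_Att: assumes "x \<in> Att" shows "emeasure (K x) Att = 1"
proof -
  interpret prob_space "q x" by (rule Prob_D(1)[OF q_prob])
  have "(\<lambda>l. \<tau> l x) -` Att \<inter> space (q x) = space (q x)"
  proof -
    have "\<tau> l x \<in> Att" for l using assms Att_inv unfolding F_def by blast
    then show ?thesis by auto
  qed
  then show ?thesis using K_emeasure[OF Att_borel] emeasure_space_1 by simp
qed

lemma mus_Att: "measure (mus n) Att = 1"
proof (induction n)
  case 0
  have "emeasure dl Att = 1" unfolding dl_def using a0_Att by (subst emeasure_return) (simp_all add: Att_borel)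
  then show ?case unfolding mus_def by (simp add: measure_def)
next
  case (Suc n)
  interpret prob_space "mus n" by (rule Prob_D(1)[OF mus_Prob])
  have AE: "AE x in mus n. x \<in> Att" using Suc by (rule AE_prob_1)
  have "emeasure (mus (Suc n)) Att = (\<integral>\<^sup>+ x. emeasure (K x) Att \<partial>mus n)"
    unfolding mus_Suc by (rule T_emeasure[OF mus_Prob Att_borel])
  also have "\<dots> = (\<integral>\<^sup>+ x. 1 \<partial>mus n)"
  proof (rule nn_integral_cong_AE)
    show "AE x in mus n. emeasure (K x) Att = 1" using AE by eventually_elim (simp add: K_Att)
  qed
  also have "\<dots> = 1" using emeasure_space_1 by simp
  finally show ?case by (simp add: measure_def)
qed

lemma mu0_Att: "measure mu0 Att = 1"
  by (rule closed_full_measure_limit[OF mus_Prob mu0(1) mu0(2) Att_closed mus_Att])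

lemma supp_sub_Att: "supp mu0 \<subseteq> Att"
proof
  fix x assume x: "x \<in> supp mu0"
  show "x \<in> Att"
  proof (rule ccontr)
    assume nx: "x \<notin> Att"
    interpret prob_space mu0 by (rule Prob_D(1)[OF mu0(1)])
    have sp: "space mu0 = UNIV" by (rule Prob_space[OF mu0(1)])
    have "measure mu0 (space mu0 - Att) = 1 - measure mu0 Att"
      by (rule prob_compl) (simp add: Prob_sets[OF mu0(1) Att_borel])
    then have "measure mu0 (- Att) = 0" using mu0_Att sp by (simp add: Compl_eq_Diff_UNIV)
    then have "emeasure mu0 (- Att) = 0" by (simp add: emeasure_eq_measure)
    moreover have "open (- Att)" using Att_closed by (simp add: open_Compl)
    ultimately show False using x nx unfolding supp_def by auto
  qed
qed

lemma supp_closed: "closed (supp \<mu>)"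
proof -
  have "open (- supp \<mu>)"
  proof (subst open_subopen, intro ballI)
    fix x assume "x \<in> - supp \<mu>"
    then obtain U where U: "open U" "x \<in> U" "\<not> emeasure \<mu> U > 0" unfolding supp_def by auto
    have "U \<subseteq> - supp \<mu>" using U unfolding supp_def by auto
    then show "\<exists>T. open T \<and> x \<in> T \<and> T \<subseteq> - supp \<mu>" using U by blast
  qed
  then show ?thesis by (simp add: closed_def)
qed

lemma supp_ne: fixes \<mu> :: "'x measure" assumes "\<mu> \<in> Prob" shows "supp \<mu> \<noteq> {}"
proof
  assume S: "supp \<mu> = {}"
  interpret prob_space \<mu> by (rule Prob_D(1)[OF assms])
  define C where "C = {U :: 'x set. open U \<and> emeasure \<mu> U = 0}"
  have cov: "UNIV \<subseteq> \<Union>C"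
  proof
    fix x :: 'x
    have "x \<notin> supp \<mu>" using S by simp
    then obtain U where "open U" "x \<in> U" "\<not> emeasure \<mu> U > 0" unfolding supp_def by auto
    then have "U \<in> C" "x \<in> U" unfolding C_def by (auto simp: not_gr_zero)
    then show "x \<in> \<Union>C" by blast
  qed
  obtain C' where C': "C' \<subseteq> C" "finite C'" "UNIV \<subseteq> \<Union>C'"
    by (rule compactE[OF cX cov]) (auto simp: C_def)
  have sets: "U \<in> sets \<mu>" if "U \<in> C'" for U
    using that C'(1) Prob_sets[OF assms] unfolding C_def by auto
  have "emeasure \<mu> (\<Union>C') \<le> (\<Sum>U\<in>C'. emeasure \<mu> U)"
    using emeasure_subadditive_finite[OF C'(2), of "\<lambda>U. U" \<mu>] sets by auto
  also have "\<dots> = 0" using C'(1) unfolding C_def by (intro sum.neutral) auto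
  finally have "emeasure \<mu> (\<Union>C') = 0" by simp
  moreover have "\<Union>C' = space \<mu>" using C'(3) Prob_space[OF assms] by auto
  ultimately show False using emeasure_space_1 by simp
qed

lemma F_supp: "F (supp mu0) \<subseteq> supp mu0"
proof
  fix y assume "y \<in> F (supp mu0)"
  then obtain l0 x0 where x0: "x0 \<in> supp mu0" and y: "y = \<tau> l0 x0" unfolding F_def by blast
  show "y \<in> supp mu0" unfolding supp_def
  proof (intro CollectI allI impI)
    fix U assume U: "open U \<and> y \<in> U"
    define P where "P = (\<lambda>p :: 'l \<times> 'x. \<tau> (fst p) (snd p)) -` U"
    have Po: "open P" unfolding P_def using U by (intro open_vimage tau_cont) auto
    have "(l0, x0) \<in> P" unfolding P_def using U y by simp
    then obtain V W where VW: "open V" "open W" "(l0, x0) \<in> V \<times> W" "V \<times> W \<subseteq> P"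
      using open_prod_elim[OF Po] by metis
    have Wpos: "emeasure mu0 W > 0" using x0 VW unfolding supp_def by auto
    show "emeasure mu0 U > 0"
    proof (rule ccontr)
      assume "\<not> emeasure mu0 U > 0"
      then have U0: "emeasure mu0 U = 0" by (simp add: not_gr_zero)
      have Ub: "U \<in> sets borel" using U by simp
      have "emeasure mu0 U = (\<integral>\<^sup>+ x. emeasure (K x) U \<partial>mu0)"
        using T_emeasure[OF mu0(1) Ub] mu0_fixed by simp
      then have "(\<integral>\<^sup>+ x. emeasure (K x) U \<partial>mu0) = 0" using U0 by simp
      moreover have "(\<lambda>x. emeasure (K x) U) \<in> borel_measurable mu0"
        using measurable_compose[OF K_meas_mu[OF mu0(1)] measurable_emeasure_subprob_algebra[OF Ub]] .
      ultimately have AE0: "AE x in mu0. emeasure (K x) U = 0" using nn_integral_0_iff_AE by blast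
      have pos: "emeasure (K x) U > 0" if xW: "x \<in> W" for x
      proof -
        interpret qx: prob_space "q x" by (rule Prob_D(1)[OF q_prob])
        have sub: "V \<subseteq> (\<lambda>l. \<tau> l x) -` U \<inter> space (q x)"
          using VW xW Prob_space[OF q_prob] unfolding P_def by auto
        have ms: "(\<lambda>l. \<tau> l x) -` U \<inter> space (q x) \<in> sets (q x)"
          by (rule measurable_sets[OF tau_meas_q Ub])
        have "V \<noteq> {}" using VW by auto
        then have "measure (q x) V > 0" using H4 VW(1) by blast
        then have "emeasure (q x) V > 0" by (simp add: qx.emeasure_eq_measure)
        also have "emeasure (q x) V \<le> emeasure (q x) ((\<lambda>l. \<tau> l x) -` U \<inter> space (q x))"
          by (rule emeasure_mono[OF sub ms])
        also have "\<dots> = emeasure (K x) U" using K_emeasure[OF Ub] by simp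
        finally show ?thesis .
      qed
      have "AE x in mu0. x \<notin> W" using AE0 by eventually_elim (use pos in force)
      moreover have "W \<in> sets mu0" using VW(2) Prob_sets[OF mu0(1)] by simp
      ultimately have "W \<in> null_sets mu0" using AE_iff_null_sets by blast
      then show False using Wpos null_setsD1 by fastforce
    qed
  qed
qed

lemma Att_sub_supp: "Att \<subseteq> supp mu0"
proof
  fix a assume a: "a \<in> Att"
  define S where "S = supp mu0"
  have Sc: "closed S" "S \<noteq> {}" unfolding S_def using supp_closed supp_ne[OF mu0(1)] by auto
  have FS: "(F ^^ k) S \<subseteq> S" for k
  proof (induction k)
    case 0 then show ?case by simp
  next
    case (Suc k)
    have "(F ^^ Suc k) S = F ((F ^^ k) S)" by simp
    also have "\<dots> \<subseteq> F S" by (rule F_mono[OF Suc])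
    also have "\<dots> \<subseteq> S" unfolding S_def by (rule F_supp)
    finally show ?case .
  qed
  have le: "infdist a S \<le> hausdorff_dist ((F ^^ k) S) Att" for k
  proof -
    have "infdist a S \<le> infdist a ((F ^^ k) S)"
      by (rule infdist_mono[OF FS Fn_ne[OF Sc(2)]])
    also have "\<dots> \<le> hausdorff_dist ((F ^^ k) S) Att" by (rule hd_ge2[OF a])
    finally show ?thesis .
  qed
  have "infdist a S \<le> 0"
    by (rule LIMSEQ_le_const[OF hd_conv[OF Sc(2)]]) (use le in auto)
  then have "infdist a S = 0" using infdist_nonneg[of a S] by simp
  then show "a \<in> supp mu0" using in_closed_iff_infdist_zero[OF Sc] unfolding S_def by simp
qed

lemma supp_mu0: "supp mu0 = Att"
  using supp_sub_Att Att_sub_supp by blast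

end



theorem mainTheorem1:
  fixes \<tau> :: "'l::metric_space \<Rightarrow> 'x::metric_space \<Rightarrow> 'x"
    and q :: "'x \<Rightarrow> 'l measure"
    and M :: nat and s r t :: real
  assumes cX: "compact (UNIV :: 'x set)"
    and cL: "compact (UNIV :: 'l set)"
    and tau_cont: "continuous_on UNIV (\<lambda>p :: 'l \<times> 'x. \<tau> (fst p) (snd p))"
    and q_prob: "\<And>x. q x \<in> Prob"
    and q_cont: "\<And>x e. e > 0 \<Longrightarrow> \<exists>\<delta>>0. \<forall>y. dist x y < \<delta> \<longrightarrow> dMK (q x) (q y) < e"
    and W1: "\<And>l. 1-lipschitz_on UNIV (\<tau> l)"
    and CP1: "M \<ge> 1" "0 < s" "s < 1"
      "\<And>ls. length ls = M \<Longrightarrow> s-lipschitz_on UNIV (tau_seq \<tau> ls)"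
    and H2: "r \<ge> 0" "\<And>l1 l2 x. dist (\<tau> l1 x) (\<tau> l2 x) \<le> r * dist l1 l2"
    and H3: "t \<ge> 0" "\<And>x y. dMK (q x) (q y) \<le> t * dist x y"
    and H4: "\<And>A x. open A \<Longrightarrow> A \<noteq> {} \<Longrightarrow> measure (q x) A > 0"
    and small: "s + r * real M * t < 1"
  shows "\<exists>A. A \<noteq> {} \<and> compact A \<and> fractal_op \<tau> A = A
           \<and> (\<forall>A'. A' \<noteq> {} \<and> compact A' \<and> fractal_op \<tau> A' = A' \<longrightarrow> A' = A)
           \<and> (\<forall>B. B \<noteq> {} \<and> compact B \<longrightarrow>
                 (\<lambda>k. hausdorff_dist ((fractal_op \<tau> ^^ k) B) A) \<longlonglongrightarrow> 0)
           \<and> (\<exists>\<mu>\<in>Prob. markov_op q \<tau> \<mu> = \<mu>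
                 \<and> (\<forall>\<mu>'\<in>Prob. markov_op q \<tau> \<mu>' = \<mu>' \<longrightarrow> \<mu>' = \<mu>)
                 \<and> (\<forall>\<nu>\<in>Prob. (\<lambda>k. dMK ((markov_op q \<tau> ^^ k) \<nu>) \<mu>) \<longlonglongrightarrow> 0)
                 \<and> supp \<mu> = A)"
  proof -
  interpret I: ifs \<tau> q M s r t
    by (rule ifs.intro; fact cX cL tau_cont q_prob W1 CP1 H2 H3 H4 small)
  have 1: "I.Att \<noteq> {}" by (rule I.Att_ne)
  have 2: "compact I.Att" by (rule I.Att_compact)
  have 3: "fractal_op \<tau> I.Att = I.Att" by (rule I.Att_inv)
  have 4: "\<forall>A'. A' \<noteq> {} \<and> compact A' \<and> fractal_op \<tau> A' = A' \<longrightarrow> A' = I.Att"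
  proof (intro allI impI)
    fix A' :: "'x set" assume "A' \<noteq> {} \<and> compact A' \<and> fractal_op \<tau> A' = A'"
    then show "A' = I.Att" using I.Att_unique by blast
  qed
  have 5: "\<forall>B. B \<noteq> {} \<and> compact B \<longrightarrow> (\<lambda>k. hausdorff_dist ((fractal_op \<tau> ^^ k) B) I.Att) \<longlonglongrightarrow> 0"
  proof (intro allI impI)
    fix B :: "'x set" assume "B \<noteq> {} \<and> compact B"
    then show "(\<lambda>k. hausdorff_dist ((fractal_op \<tau> ^^ k) B) I.Att) \<longlonglongrightarrow> 0"
      using I.hd_conv by blast
  qed
  have 6: "\<exists>\<mu>\<in>Prob. markov_op q \<tau> \<mu> = \<mu>
                 \<and> (\<forall>\<mu>'\<in>Prob. markov_op q \<tau> \<mu>' = \<mu>' \<longrightarrow> \<mu>' = \<mu>)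
                 \<and> (\<forall>\<nu>\<in>Prob. (\<lambda>k. dMK ((markov_op q \<tau> ^^ k) \<nu>) \<mu>) \<longlonglongrightarrow> 0)
                 \<and> supp \<mu> = I.Att"
  proof (rule bexI[OF _ I.mu0(1)], intro conjI)
    show "markov_op q \<tau> I.mu0 = I.mu0" by (rule I.mu0_fixed)
    show "\<forall>\<mu>'\<in>Prob. markov_op q \<tau> \<mu>' = \<mu>' \<longrightarrow> \<mu>' = I.mu0"
    proof (intro ballI impI)
      fix \<mu>' :: "'x measure" assume "\<mu>' \<in> Prob" "markov_op q \<tau> \<mu>' = \<mu>'"
      then show "\<mu>' = I.mu0" by (rule I.mu0_unique)
    qed
    show "\<forall>\<nu>\<in>Prob. (\<lambda>k. dMK ((markov_op q \<tau> ^^ k) \<nu>) I.mu0) \<longlonglongrightarrow> 0"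
    proof (intro ballI)
      fix \<nu> :: "'x measure" assume "\<nu> \<in> Prob"
      then show "(\<lambda>k. dMK ((markov_op q \<tau> ^^ k) \<nu>) I.mu0) \<longlonglongrightarrow> 0" by (rule I.mu0_conv)
    qed
    show "supp I.mu0 = I.Att" by (rule I.supp_mu0)
  qed
  show ?thesis
    by (rule exI[of _ I.Att]) (intro conjI 1 2 3 4 5 6)
qed

end
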